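(* Let $T$ be a tree with maximum degree $\Delta\geq 2$. Then $m_T(\mu_2)\leq \Delta-1$, where $\mu_2=\mu_2(T)$ is the algebraic connectivity of $T$.
   Context: For a graph $G$ on $n$ vertices, the Laplacian matrix is $L(G)=D(G)-A(G)$, with $D(G)$ the diagonal degree matrix and $A(G)$ the adjacency matrix. Its eigenvalues are denoted $0=\mu_1(G)\leq\mu_2(G)\leq\cdots\leq\mu_n(G)$; $\mu_2(G)$ is the algebraic connectivity, and $m_G(\mu)$ denotes the multiplicity of $\mu$ as an eigenvalue of $L(G)$. *)

theory Defs
  imports "Jordan_Normal_Form.Char_Poly"
begin

text \<open>Simple graphs on vertex set {0..<n}: edge relation E, symmetric and irreflexive
  on the vertex set (values of E outside {0..<n} are irrelevant).\<close>

definition simple_graph :: "nat \<Rightarrow> (nat \<Rightarrow> nat \<Rightarrow> bool) \<Rightarrow> bool" where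
  "simple_graph n E \<longleftrightarrow> (\<forall>i<n. \<forall>j<n. E i j \<longleftrightarrow> E j i) \<and> (\<forall>i<n. \<not> E i i)"

definition degree :: "nat \<Rightarrow> (nat \<Rightarrow> nat \<Rightarrow> bool) \<Rightarrow> nat \<Rightarrow> nat" where
  "degree n E i = card {j. j < n \<and> E i j}"

definition max_degree :: "nat \<Rightarrow> (nat \<Rightarrow> nat \<Rightarrow> bool) \<Rightarrow> nat" where
  "max_degree n E = Max (degree n E ` {0..<n})"

definition num_edges :: "nat \<Rightarrow> (nat \<Rightarrow> nat \<Rightarrow> bool) \<Rightarrow> nat" where
  "num_edges n E = card {(i, j). i < j \<and> j < n \<and> E i j}"

definition connected_graph :: "nat \<Rightarrow> (nat \<Rightarrow> nat \<Rightarrow> bool) \<Rightarrow> bool" where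
  "connected_graph n E \<longleftrightarrow>
     (\<forall>i<n. \<forall>j<n. (\<lambda>x y. x < n \<and> y < n \<and> E x y)\<^sup>*\<^sup>* i j)"

definition is_tree :: "nat \<Rightarrow> (nat \<Rightarrow> nat \<Rightarrow> bool) \<Rightarrow> bool" where
  "is_tree n E \<longleftrightarrow> n \<ge> 1 \<and> simple_graph n E \<and> connected_graph n E \<and> num_edges n E = n - 1"

definition laplacian :: "nat \<Rightarrow> (nat \<Rightarrow> nat \<Rightarrow> bool) \<Rightarrow> real mat" where
  "laplacian n E = mat n n (\<lambda>(i, j). (if i = j then real (degree n E i) else 0)
                                   - (if E i j then 1 else 0))"

definition eig_mult :: "real mat \<Rightarrow> real \<Rightarrow> nat" where
  "eig_mult A mu = order mu (char_poly A)"

text \<open>The k-th smallest eigenvalue (k \<ge> 1), counted with multiplicity: the least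
  eigenvalue mu such that at least k eigenvalues (with multiplicity) are \<le> mu.\<close>
definition kth_eigenvalue :: "real mat \<Rightarrow> nat \<Rightarrow> real" where
  "kth_eigenvalue A k = Min {mu. eigenvalue A mu \<and>
      (\<Sum>x\<in>{x. eigenvalue A x \<and> x \<le> mu}. eig_mult A x) \<ge> k}"

end

theory Submission
  imports Defs "Jordan_Normal_Form.Jordan_Normal_Form_Uniqueness" "Jordan_Normal_Form.Jordan_Normal_Form_Existence"
begin

lemma mat_vec_sum:
  assumes "A \<in> carrier_mat n n" "v \<in> carrier_vec n" "k < n"
  shows "(A *\<^sub>v v) $ k = (\<Sum>j<n. A $$ (k,j) * v $ j)"
  using assms by (auto simp: scalar_prod_def lessThan_atLeast0 intro!: sum.cong)

lemma hermitian_real_ev: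
  fixes A :: "complex mat"
  assumes A: "A \<in> carrier_mat n n"
    and sym: "\<forall>i<n. \<forall>j<n. A $$ (i,j) = cnj (A $$ (j,i))"
    and ev: "eigenvalue A a"
  shows "cnj a = a"
proof -
  from ev obtain v where v: "v \<in> carrier_vec n" "v \<noteq> 0\<^sub>v n" "A *\<^sub>v v = a \<cdot>\<^sub>v v"
    unfolding eigenvalue_def eigenvector_def using A by auto
  have eq: "(\<Sum>j<n. A $$ (k,j) * v $ j) = a * v $ k" if "k < n" for k
  proof -
    have "(A *\<^sub>v v) $ k = (a \<cdot>\<^sub>v v) $ k" using v by simp
    thus ?thesis using mat_vec_sum[OF A v(1) that] that v(1) by simp
  qed
  define S where "S = (\<Sum>k<n. \<Sum>j<n. cnj (v $ k) * A $$ (k,j) * v $ j)"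
  define N where "N = (\<Sum>k<n. cnj (v $ k) * v $ k)"
  have S1: "S = a * N"
  proof -
    have "S = (\<Sum>k<n. cnj (v $ k) * (\<Sum>j<n. A $$ (k,j) * v $ j))"
      unfolding S_def by (simp add: sum_distrib_left mult.assoc)
    also have "\<dots> = (\<Sum>k<n. cnj (v $ k) * (a * v $ k))" using eq by simp
    finally show ?thesis unfolding N_def by (simp add: sum_distrib_left algebra_simps)
  qed
  have S2: "cnj S = S"
  proof -
    have "cnj S = (\<Sum>k<n. \<Sum>j<n. v $ k * A $$ (j,k) * cnj (v $ j))"
    proof -
      have c: "cnj (A $$ (k,j)) = A $$ (j,k)" if "k < n" "j < n" for k j
      proof -
        have "A $$ (j,k) = cnj (A $$ (k,j))" using sym that by blast
        thus ?thesis by simp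
      qed
      show ?thesis unfolding S_def by (simp add: c)
    qed
    also have "\<dots> = (\<Sum>j<n. \<Sum>k<n. v $ k * A $$ (j,k) * cnj (v $ j))"
      by (rule sum.swap)
    also have "\<dots> = S" unfolding S_def by (intro sum.cong refl) (simp add: algebra_simps)
    finally show ?thesis .
  qed
  have Nr: "cnj N = N" unfolding N_def by (simp add: cnj_sum mult.commute)
  have "N \<noteq> 0"
  proof
    assume N0: "N = 0"
    have "N = of_real (\<Sum>k<n. (cmod (v $ k))^2)"
      unfolding N_def of_real_sum by (intro sum.cong refl) (metis complex_norm_square mult.commute)
    hence "(\<Sum>k<n. (cmod (v $ k))^2) = 0" using N0 by (metis of_real_eq_0_iff)
    hence "\<forall>k\<in>{..<n}. (cmod (v $ k))^2 = 0"
      by (subst (asm) sum_nonneg_eq_0_iff) auto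
    hence "v = 0\<^sub>v n" using v(1) by (intro eq_vecI) auto
    with v(2) show False by simp
  qed
  from S1 S2 Nr have "cnj a * N = a * N" by simp
  with \<open>N \<noteq> 0\<close> show ?thesis by simp
qed

lemma sym_char_poly_splits:
  fixes A :: "real mat"
  assumes A: "A \<in> carrier_mat n n"
    and sym: "\<forall>i<n. \<forall>j<n. A $$ (i,j) = A $$ (j,i)"
  shows "\<exists>as. char_poly A = (\<Prod>a\<leftarrow>as. [:- a, 1:])"
proof -
  interpret m: map_poly_inj_idom_hom "of_real :: real \<Rightarrow> complex" ..
  define Ac where "Ac = map_mat complex_of_real A"
  have Ac: "Ac \<in> carrier_mat n n" using A unfolding Ac_def by auto
  have cp: "char_poly Ac = map_poly of_real (char_poly A)"
    unfolding Ac_def using of_real_hom.char_poly_hom[OF A] by simp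
  from char_poly_factorized[OF Ac] obtain cs where cs: "char_poly Ac = (\<Prod>a\<leftarrow>cs. [:- a, 1:])"
    by auto
  have symc: "\<forall>i<n. \<forall>j<n. Ac $$ (i,j) = cnj (Ac $$ (j,i))"
    unfolding Ac_def using A sym by auto
  have real: "cnj c = c" if "c \<in> set cs" for c
  proof -
    have "poly (char_poly Ac) c = 0" unfolding cs using that
      by (simp add: poly_prod_list_zero_iff)
    hence "eigenvalue Ac c" using eigenvalue_root_char_poly[OF Ac] by simp
    from hermitian_real_ev[OF Ac symc this] show ?thesis .
  qed
  define rs where "rs = map Re cs"
  have "map complex_of_real rs = cs" unfolding rs_def using real
    by (induct cs) (auto simp: complex_eq_iff)
  hence "char_poly Ac = (\<Prod>a\<leftarrow>map complex_of_real rs. [:- a, 1:])" using cs by simp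
  also have "\<dots> = map_poly of_real (\<Prod>a\<leftarrow>rs. [:- a, 1:])"
    unfolding m.hom_prod_list by (simp add: o_def)
  finally have "map_poly of_real (char_poly A) = map_poly of_real (\<Prod>a\<leftarrow>rs. [:- a, 1:])"
    using cp by simp
  hence "char_poly A = (\<Prod>a\<leftarrow>rs. [:- a, 1:])" by (rule m.injectivity)
  thus ?thesis by blast
qed

lemma sym_ker_sq:
  fixes C :: "real mat"
  assumes C: "C \<in> carrier_mat n n"
    and sym: "\<forall>i<n. \<forall>j<n. C $$ (i,j) = C $$ (j,i)"
  shows "mat_kernel (C * C) = mat_kernel C"
proof (rule equalityI)
  have CC: "C * C \<in> carrier_mat n n" using C by auto
  show "mat_kernel (C * C) \<subseteq> mat_kernel C"
  proof
    fix v assume "v \<in> mat_kernel (C * C)"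
    hence v: "v \<in> carrier_vec n" "(C * C) *\<^sub>v v = 0\<^sub>v n" using mat_kernelD[OF CC] by auto
    define w where "w = C *\<^sub>v v"
    have w: "w \<in> carrier_vec n" unfolding w_def using C v by simp
    have Cw: "C *\<^sub>v w = 0\<^sub>v n" unfolding w_def using v C by (simp add: assoc_mult_mat_vec)
    have wk: "w $ k = (\<Sum>j<n. C $$ (k,j) * v $ j)" if "k < n" for k
      unfolding w_def using mat_vec_sum[OF C v(1) that] .
    have Cwk: "(\<Sum>j<n. C $$ (k,j) * w $ j) = 0" if "k < n" for k
      using mat_vec_sum[OF C w that] Cw that by simp
    have "(\<Sum>k<n. w $ k * w $ k) = (\<Sum>k<n. \<Sum>j<n. w $ k * C $$ (k,j) * v $ j)"
      using wk by (simp add: sum_distrib_left mult.assoc)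
    also have "\<dots> = (\<Sum>j<n. \<Sum>k<n. w $ k * C $$ (k,j) * v $ j)" by (rule sum.swap)
    also have "\<dots> = (\<Sum>j<n. v $ j * (\<Sum>k<n. C $$ (j,k) * w $ k))"
    proof (intro sum.cong refl)
      fix j assume j: "j \<in> {..<n}"
      have "(\<Sum>k<n. w $ k * C $$ (k,j) * v $ j) = (\<Sum>k<n. v $ j * (C $$ (j,k) * w $ k))"
      proof (intro sum.cong refl)
        fix k assume k: "k \<in> {..<n}"
        have "C $$ (k,j) = C $$ (j,k)" using sym j k by auto
        thus "w $ k * C $$ (k,j) * v $ j = v $ j * (C $$ (j,k) * w $ k)" by simp
      qed
      thus "(\<Sum>k<n. w $ k * C $$ (k,j) * v $ j) = v $ j * (\<Sum>k<n. C $$ (j,k) * w $ k)"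
        by (simp add: sum_distrib_left)
    qed
    also have "\<dots> = 0" using Cwk by simp
    finally have "(\<Sum>k<n. w $ k * w $ k) = 0" .
    hence "\<forall>k\<in>{..<n}. w $ k * w $ k = 0"
      by (subst (asm) sum_nonneg_eq_0_iff) auto
    hence "w = 0\<^sub>v n" using w by (intro eq_vecI) auto
    hence "C *\<^sub>v v = 0\<^sub>v n" unfolding w_def .
    thus "v \<in> mat_kernel C" by (rule mat_kernelI[OF C v(1)])
  qed
  show "mat_kernel C \<subseteq> mat_kernel (C * C)"
  proof
    fix v assume "v \<in> mat_kernel C"
    hence v: "v \<in> carrier_vec n" "C *\<^sub>v v = 0\<^sub>v n" using mat_kernelD[OF C] by auto
    have "(C * C) *\<^sub>v v = C *\<^sub>v (C *\<^sub>v v)" using C v by (simp add: assoc_mult_mat_vec)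
    also have "\<dots> = 0\<^sub>v n" using v C by (intro eq_vecI) (auto simp: scalar_prod_def)
    finally show "v \<in> mat_kernel (C * C)" by (rule mat_kernelI[OF CC v(1)])
  qed
qed

lemma sum_list_min12: "sum_list (map (min 1) xs) \<le> sum_list (map (min (2::nat)) xs)"
  by (induct xs) auto

lemma sum_list_min12_eq:
  assumes "sum_list (map (min 1) xs) = sum_list (map (min (2::nat)) xs)" "\<forall>x\<in>set xs. x \<noteq> 0"
  shows "\<forall>x\<in>set xs. x = 1"
  using assms
proof (induct xs)
  case (Cons x xs)
  have "sum_list (map (min 1) xs) \<le> sum_list (map (min (2::nat)) xs)" by (rule sum_list_min12)
  moreover have "min 1 x \<le> min 2 x" by auto
  ultimately have "min 1 x = min 2 x" "sum_list (map (min 1) xs) = sum_list (map (min (2::nat)) xs)"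
    using Cons(2) by auto
  thus ?case using Cons by auto
qed simp

lemma jordan_matrix_ones:
  "i < length es \<Longrightarrow> j < length es \<Longrightarrow>
    jordan_matrix (map (\<lambda>a. (1::nat, a)) es) $$ (i,j) = (if i = j then es ! i else 0)"
proof (induct es arbitrary: i j)
  case (Cons a es)
  have len: "sum_list (map fst (map (\<lambda>a. (1::nat, a)) es)) = length es"
    by (induct es) auto
  let ?J = "jordan_matrix (map (\<lambda>a. (1::nat, a)) es)"
  have dJ: "dim_row ?J = length es" "dim_col ?J = length es" using len by auto
  have JM: "jordan_matrix (map (\<lambda>a. (1::nat, a)) (a # es)) = four_block_mat (jordan_block 1 a)
     (0\<^sub>m 1 (length es)) (0\<^sub>m (length es) 1) ?J"
    using jordan_matrix_Cons[of 1 a "map (\<lambda>a. (1::nat, a)) es"] len by simp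
  show ?case
  proof (cases i)
    case 0
    thus ?thesis using Cons(3) dJ unfolding JM by (cases j) auto
  next
    case (Suc i')
    thus ?thesis using Cons(2,3) dJ Cons(1)[of i' "j - 1"] unfolding JM by (cases j) auto
  qed
qed simp

lemma mat_mult_sum:
  assumes "M \<in> carrier_mat n m" "N \<in> carrier_mat m p" "k < n" "i < p"
  shows "(M * N) $$ (k,i) = (\<Sum>j<m. M $$ (k,j) * N $$ (j,i))"
  using assms by (auto simp: scalar_prod_def lessThan_atLeast0 intro!: sum.cong)

lemma sum_delta_mult:
  fixes f :: "nat \<Rightarrow> real"
  assumes "i < n"
  shows "(\<Sum>j<n. f j * (if j = i then a else 0)) = f i * a"
proof -
  have "(\<Sum>j<n. f j * (if j = i then a else 0)) = (\<Sum>j<n. if j = i then f i * a else 0)"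
    by (intro sum.cong) auto
  also have "\<dots> = f i * a" using assms by (simp add: sum.delta)
  finally show ?thesis .
qed

lemma sym_spectral:
  fixes A :: "real mat"
  assumes A: "A \<in> carrier_mat n n"
    and sym: "\<forall>i<n. \<forall>j<n. A $$ (i,j) = A $$ (j,i)"
  shows "\<exists>d q. (\<forall>i<n. \<forall>k<n. (\<Sum>j<n. A $$ (k,j) * q i j) = d i * q i k)
    \<and> (\<forall>\<mu>. Polynomial.order \<mu> (char_poly A) = card {i. i < n \<and> d i = \<mu>})
    \<and> (\<forall>y. \<exists>c. \<forall>k<n. y k = (\<Sum>i<n. c i * q i k))
    \<and> (\<forall>c. (\<forall>k<n. (\<Sum>i<n. c i * q i k) = 0) \<longrightarrow> (\<forall>i<n. c i = 0))"
proof -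
  from sym_char_poly_splits[OF A sym] obtain as where cp: "char_poly A = (\<Prod>a\<leftarrow>as. [:- a, 1:])"
    by auto
  from jordan_nf_exists[OF A cp] obtain n_as where jnf: "jordan_nf A n_as" by auto
  have ones: "m = 1" if mem: "(m,e) \<in> set n_as" for m e
  proof -
    define C where "C = char_matrix A e"
    have C: "C \<in> carrier_mat n n" unfolding C_def using A by simp
    have symC: "\<forall>i<n. \<forall>j<n. C $$ (i,j) = C $$ (j,i)"
      unfolding C_def char_matrix_def using A sym by auto
    have p1: "C ^\<^sub>m 1 = C" using C by simp
    have p2: "C ^\<^sub>m 2 = C * C" using C by (simp add: numeral_2_eq_2)
    have "kernel_dim (C * C) = kernel_dim C"
      unfolding kernel_dim_def using C sym_ker_sq[OF C symC] by simp
    hence "dim_gen_eigenspace A e 1 = dim_gen_eigenspace A e 2"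
      unfolding dim_gen_eigenspace_def C_def[symmetric] p1 p2 by simp
    hence eq: "sum_list (map (min 1) (map fst [(n, e')\<leftarrow>n_as . e' = e]))
       = sum_list (map (min 2) (map fst [(n, e')\<leftarrow>n_as . e' = e]))"
      unfolding dim_gen_eigenspace[OF jnf] by simp
    have nz: "\<forall>x\<in>set (map fst [(n, e')\<leftarrow>n_as . e' = e]). x \<noteq> 0"
      using jnf unfolding jordan_nf_def by force
    have "m \<in> set (map fst [(n, e')\<leftarrow>n_as . e' = e])" using mem by force
    with sum_list_min12_eq[OF eq nz] show "m = 1" by blast
  qed
  define es where "es = map snd n_as"
  have nas0: "map (\<lambda>x. (1::nat, snd x)) n_as = n_as"
  proof (rule map_idI)
    fix p assume p: "p \<in> set n_as"
    have "fst p = 1" using ones[of "fst p" "snd p"] p by simp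
    thus "(1, snd p) = p" by (metis prod.collapse)
  qed
  have nas: "n_as = map (\<lambda>a. (1::nat, a)) es"
    unfolding es_def map_map o_def using nas0 by simp
  have sim: "similar_mat A (jordan_matrix n_as)" using jnf unfolding jordan_nf_def by auto
  then obtain P Q where wit: "similar_mat_wit A (jordan_matrix n_as) P Q"
    unfolding similar_mat_def by auto
  note w = similar_mat_witD2[OF A wit]
  have len: "length es = n"
  proof -
    have "jordan_matrix n_as \<in> carrier_mat n n" using w by auto
    moreover have "sum_list (map fst (map (\<lambda>a. (1::nat, a)) es)) = length es" by (induct es) auto
    ultimately show ?thesis using jordan_matrix_carrier[of n_as] unfolding nas by auto
  qed
  define J where "J = jordan_matrix n_as"
  have J: "J \<in> carrier_mat n n" using w unfolding J_def by auto
  have Jij: "J $$ (i,j) = (if i = j then es ! i else 0)" if "i < n" "j < n" for i j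
    unfolding J_def nas using jordan_matrix_ones[of i es j] that len by simp
  have P: "P \<in> carrier_mat n n" and Q: "Q \<in> carrier_mat n n" using w by auto
  have AP: "A * P = P * J"
  proof -
    have "A * P = (P * J * Q) * P" using w unfolding J_def by simp
    also have "\<dots> = P * J * (Q * P)" using P J Q by (simp add: assoc_mult_mat[of _ n n _ n _ n])
    also have "\<dots> = P * J" using w P J by simp
    finally show ?thesis .
  qed
  define q where "q i k = P $$ (k,i)" for i k
  define d where "d i = es ! i" for i
  have eig: "\<forall>i<n. \<forall>k<n. (\<Sum>j<n. A $$ (k,j) * q i j) = d i * q i k"
  proof (intro allI impI)
    fix i k assume i: "i < n" and k: "k < n"
    have "(\<Sum>j<n. A $$ (k,j) * q i j) = (A * P) $$ (k,i)"
      unfolding q_def using mat_mult_sum[OF A P k i] by simp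
    also have "\<dots> = (P * J) $$ (k,i)" unfolding AP ..
    also have "\<dots> = (\<Sum>j<n. P $$ (k,j) * J $$ (j,i))" using mat_mult_sum[OF P J k i] by simp
    also have "\<dots> = (\<Sum>j<n. P $$ (k,j) * (if j = i then es ! i else 0))"
      by (intro sum.cong refl) (use Jij i in auto)
    also have "\<dots> = P $$ (k,i) * es ! i" by (rule sum_delta_mult[OF i])
    finally show "(\<Sum>j<n. A $$ (k,j) * q i j) = d i * q i k" unfolding q_def d_def by simp
  qed
  have ord: "\<forall>\<mu>. Polynomial.order \<mu> (char_poly A) = card {i. i < n \<and> d i = \<mu>}"
  proof
    fix \<mu>
    have "Polynomial.order \<mu> (char_poly A) = sum_list (map fst (filter (\<lambda>na. snd na = \<mu>) n_as))"
      by (rule jordan_nf_order[OF jnf])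
    also have "\<dots> = length (filter (\<lambda>a. a = \<mu>) es)" unfolding nas
      by (induct es) auto
    also have "\<dots> = card {i. i < n \<and> d i = \<mu>}"
      unfolding length_filter_conv_card d_def len ..
    finally show "Polynomial.order \<mu> (char_poly A) = card {i. i < n \<and> d i = \<mu>}" .
  qed
  have span: "\<forall>y. \<exists>c. \<forall>k<n. y k = (\<Sum>i<n. c i * q i k)"
  proof
    fix y :: "nat \<Rightarrow> real"
    define c where "c i = (\<Sum>l<n. Q $$ (i,l) * y l)" for i
    have "y k = (\<Sum>i<n. c i * q i k)" if k: "k < n" for k
    proof -
      have "(\<Sum>i<n. c i * q i k) = (\<Sum>i<n. \<Sum>l<n. P $$ (k,i) * Q $$ (i,l) * y l)"
        unfolding c_def q_def by (simp add: sum_distrib_left sum_distrib_right algebra_simps)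
      also have "\<dots> = (\<Sum>l<n. \<Sum>i<n. P $$ (k,i) * Q $$ (i,l) * y l)" by (rule sum.swap)
      also have "\<dots> = (\<Sum>l<n. (P * Q) $$ (k,l) * y l)"
        by (intro sum.cong refl) (simp add: mat_mult_sum[OF P Q k] sum_distrib_right)
      also have "\<dots> = (\<Sum>l<n. (if k = l then y l else 0))"
        using w k by (intro sum.cong refl) auto
      also have "\<dots> = y k" using k by (simp add: sum.delta)
      finally show ?thesis by simp
    qed
    thus "\<exists>c. \<forall>k<n. y k = (\<Sum>i<n. c i * q i k)" by blast
  qed
  have indep: "\<forall>c. (\<forall>k<n. (\<Sum>i<n. c i * q i k) = 0) \<longrightarrow> (\<forall>i<n. c i = 0)"
  proof (intro allI impI)
    fix c :: "nat \<Rightarrow> real" and i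
    assume h: "\<forall>k<n. (\<Sum>i<n. c i * q i k) = 0" and i: "i < n"
    have "c i = (\<Sum>k<n. (if i = k then c k else 0))" using i by (simp add: sum.delta)
    also have "\<dots> = (\<Sum>k<n. (Q * P) $$ (i,k) * c k)"
      using w i by (intro sum.cong refl) auto
    also have "\<dots> = (\<Sum>k<n. \<Sum>l<n. Q $$ (i,l) * P $$ (l,k) * c k)"
      by (intro sum.cong refl) (simp add: mat_mult_sum[OF Q P i] sum_distrib_right)
    also have "\<dots> = (\<Sum>l<n. \<Sum>k<n. Q $$ (i,l) * P $$ (l,k) * c k)" by (rule sum.swap)
    also have "\<dots> = (\<Sum>l<n. Q $$ (i,l) * (\<Sum>k<n. c k * q k l))"
      unfolding q_def by (simp add: sum_distrib_left algebra_simps)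
    also have "\<dots> = 0" using h by simp
    finally show "c i = 0" .
  qed
  show ?thesis using eig ord span indep by blast
qed

locale sgraph =
  fixes n :: nat and E :: "nat \<Rightarrow> nat \<Rightarrow> bool"
  assumes symE: "\<And>i j. i < n \<Longrightarrow> j < n \<Longrightarrow> E i j = E j i"
    and irrE: "\<And>i. i < n \<Longrightarrow> \<not> E i i"
begin

definition Mx :: "(nat \<Rightarrow> real) \<Rightarrow> nat \<Rightarrow> real" where
  "Mx x k = (\<Sum>j<n. laplacian n E $$ (k,j) * x j)"

definition ip :: "(nat \<Rightarrow> real) \<Rightarrow> (nat \<Rightarrow> real) \<Rightarrow> real" where
  "ip x y = (\<Sum>k<n. x k * y k)"

definition eig :: "real \<Rightarrow> (nat \<Rightarrow> real) \<Rightarrow> bool" where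
  "eig \<mu> x \<longleftrightarrow> (\<forall>k<n. Mx x k = \<mu> * x k)"

lemma L_carrier: "laplacian n E \<in> carrier_mat n n"
  unfolding laplacian_def by simp

lemma L_ent: "k < n \<Longrightarrow> j < n \<Longrightarrow> laplacian n E $$ (k,j) =
   (if k = j then real (degree n E k) else 0) - (if E k j then 1 else 0)"
  unfolding laplacian_def by simp

lemma L_sym: "\<forall>i<n. \<forall>j<n. laplacian n E $$ (i,j) = laplacian n E $$ (j,i)"
  using symE by (auto simp: L_ent)

lemma degree_sum: "real (degree n E k) = (\<Sum>j<n. if E k j then 1 else 0)"
proof -
  have "(\<Sum>j<n. if E k j then 1 else (0::real)) = real (card ({..<n} \<inter> {j. E k j}))"
    by (simp add: sum.If_cases)
  also have "{..<n} \<inter> {j. E k j} = {j. j < n \<and> E k j}" by auto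
  finally show ?thesis unfolding degree_def by simp
qed

lemma Mx_expand: "k < n \<Longrightarrow> Mx x k = real (degree n E k) * x k - (\<Sum>j<n. if E k j then x j else 0)"
proof -
  assume k: "k < n"
  have "Mx x k = (\<Sum>j<n. (if k = j then real (degree n E k) * x j else 0) - (if E k j then x j else 0))"
    unfolding Mx_def by (intro sum.cong refl) (auto simp: L_ent k algebra_simps)
  also have "\<dots> = real (degree n E k) * x k - (\<Sum>j<n. if E k j then x j else 0)"
    using k by (simp add: sum_subtractf sum.delta)
  finally show ?thesis .
qed

lemma Mx_expand2: "k < n \<Longrightarrow> Mx x k = (\<Sum>j<n. if E k j then x k - x j else 0)"
  unfolding Mx_expand degree_sum
  by (simp add: sum_distrib_right sum_subtractf[symmetric] if_distrib cong: if_cong)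

lemma Mx_cong: "(\<And>j. j < n \<Longrightarrow> x j = y j) \<Longrightarrow> Mx x k = Mx y k"
  unfolding Mx_def by simp

lemma Mx_lin: "Mx (\<lambda>j. a * x j + b * y j) k = a * Mx x k + b * Mx y k"
  unfolding Mx_def by (simp add: sum.distrib sum_distrib_left algebra_simps)

lemma Mx_sum: "finite I \<Longrightarrow> Mx (\<lambda>j. \<Sum>i\<in>I. f i j) k = (\<Sum>i\<in>I. Mx (f i) k)"
  unfolding Mx_def by (simp add: sum_distrib_left sum.swap[of _ I])

lemma Mx_const: "k < n \<Longrightarrow> Mx (\<lambda>_. c) k = 0"
  by (simp add: Mx_expand2)

lemma ip_sym: "ip x y = ip y x"
  unfolding ip_def by (simp add: mult.commute)

lemma ip_M_sym: "ip y (Mx x) = ip x (Mx y)"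
proof -
  have "ip y (Mx x) = (\<Sum>k<n. \<Sum>j<n. y k * laplacian n E $$ (k,j) * x j)"
    unfolding ip_def Mx_def by (simp add: sum_distrib_left mult.assoc)
  also have "\<dots> = (\<Sum>j<n. \<Sum>k<n. y k * laplacian n E $$ (k,j) * x j)" by (rule sum.swap)
  also have "\<dots> = (\<Sum>j<n. \<Sum>k<n. x j * laplacian n E $$ (j,k) * y k)"
    using L_sym by (intro sum.cong refl) (simp add: algebra_simps)
  also have "\<dots> = ip x (Mx y)"
    unfolding ip_def Mx_def by (simp add: sum_distrib_left mult.assoc)
  finally show ?thesis .
qed

lemma sum_sym_swap: "(\<Sum>k<n. \<Sum>j<n. if E k j then f k j else 0) = (\<Sum>k<n. \<Sum>j<n. if E k j then f j k else (0::real))"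
proof -
  have "(\<Sum>k<n. \<Sum>j<n. if E k j then f k j else 0) = (\<Sum>j<n. \<Sum>k<n. if E k j then f k j else (0::real))"
    by (rule sum.swap)
  also have "\<dots> = (\<Sum>j<n. \<Sum>k<n. if E j k then f k j else (0::real))"
    using symE by (intro sum.cong refl) auto
  finally show ?thesis .
qed

lemma quad: "ip x (Mx x) = (\<Sum>k<n. \<Sum>j<n. if E k j then (x k - x j)^2 else 0) / 2"
proof -
  have a: "ip x (Mx x) = (\<Sum>k<n. \<Sum>j<n. if E k j then x k * x k - x k * x j else 0)"
    unfolding ip_def by (intro sum.cong refl) (simp add: Mx_expand2 sum_distrib_left algebra_simps if_distrib cong: if_cong)
  have b: "(\<Sum>k<n. \<Sum>j<n. if E k j then x j * x j - x j * x k else 0) = ip x (Mx x)"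
    unfolding a by (rule sum_sym_swap[symmetric])
  have "(\<Sum>k<n. \<Sum>j<n. if E k j then (x k - x j)^2 else 0)
     = (\<Sum>k<n. \<Sum>j<n. (if E k j then x k * x k - x k * x j else 0) + (if E k j then x j * x j - x j * x k else 0))"
    by (intro sum.cong refl) (simp add: power2_eq_square algebra_simps)
  also have "\<dots> = 2 * ip x (Mx x)" using a b by (simp add: sum.distrib)
  finally show ?thesis by simp
qed

lemma quad_nonneg: "ip x (Mx x) \<ge> 0"
  unfolding quad by (intro divide_nonneg_pos sum_nonneg) auto

lemma ip_self_nonneg: "ip x x \<ge> 0"
  unfolding ip_def by (intro sum_nonneg) auto

lemma ip_self_zero: "ip x x = 0 \<longleftrightarrow> (\<forall>k<n. x k = 0)"
  unfolding ip_def by (subst sum_nonneg_eq_0_iff) auto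

lemma eigenvalue_iff: "eigenvalue (laplacian n E) \<mu> \<longleftrightarrow> (\<exists>x. (\<exists>k<n. x k \<noteq> 0) \<and> eig \<mu> x)"
proof
  assume "eigenvalue (laplacian n E) \<mu>"
  then obtain v where v: "v \<in> carrier_vec n" "v \<noteq> 0\<^sub>v n" "laplacian n E *\<^sub>v v = \<mu> \<cdot>\<^sub>v v"
    unfolding eigenvalue_def eigenvector_def using L_carrier by auto
  define x where "x k = v $ k" for k
  have "\<exists>k<n. x k \<noteq> 0"
  proof (rule ccontr)
    assume "\<not> ?thesis"
    hence "v = 0\<^sub>v n" using v(1) unfolding x_def by (intro eq_vecI) auto
    with v(2) show False by simp
  qed
  moreover have "eig \<mu> x" unfolding eig_def
  proof (intro allI impI)
    fix k assume k: "k < n"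
    have "(laplacian n E *\<^sub>v v) $ k = (\<mu> \<cdot>\<^sub>v v) $ k" using v by simp
    thus "Mx x k = \<mu> * x k" using mat_vec_sum[OF L_carrier v(1) k] k v(1)
      unfolding Mx_def x_def by simp
  qed
  ultimately show "\<exists>x. (\<exists>k<n. x k \<noteq> 0) \<and> eig \<mu> x" by blast
next
  assume "\<exists>x. (\<exists>k<n. x k \<noteq> 0) \<and> eig \<mu> x"
  then obtain x k where k: "k < n" "x k \<noteq> 0" and e: "eig \<mu> x" by auto
  define v where "v = vec n x"
  have v: "v \<in> carrier_vec n" unfolding v_def by simp
  have "v \<noteq> 0\<^sub>v n" using k unfolding v_def by (metis index_vec index_zero_vec(1))
  moreover have "laplacian n E *\<^sub>v v = \<mu> \<cdot>\<^sub>v v"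
  proof (rule eq_vecI)
    fix i assume i: "i < dim_vec (\<mu> \<cdot>\<^sub>v v)"
    hence i': "i < n" using v by simp
    have "(laplacian n E *\<^sub>v v) $ i = Mx x i" using mat_vec_sum[OF L_carrier v i'] i'
      unfolding Mx_def v_def by simp
    also have "\<dots> = \<mu> * x i" using e i' unfolding eig_def by simp
    finally show "(laplacian n E *\<^sub>v v) $ i = (\<mu> \<cdot>\<^sub>v v) $ i" using i' unfolding v_def by simp
  qed (use v L_carrier in auto)
  ultimately show "eigenvalue (laplacian n E) \<mu>"
    unfolding eigenvalue_def eigenvector_def using v L_carrier by auto
qed

end

locale spgraph = sgraph +
  fixes d :: "nat \<Rightarrow> real" and q :: "nat \<Rightarrow> nat \<Rightarrow> real"
  assumes eigq: "\<forall>i<n. \<forall>k<n. (\<Sum>j<n. laplacian n E $$ (k,j) * q i j) = d i * q i k"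
    and ordq: "\<forall>\<mu>. Polynomial.order \<mu> (char_poly (laplacian n E)) = card {i. i < n \<and> d i = \<mu>}"
    and spanq: "\<forall>y. \<exists>c. \<forall>k<n. y k = (\<Sum>i<n. c i * q i k)"
    and indepq: "\<forall>c. (\<forall>k<n. (\<Sum>i<n. c i * q i k) = 0) \<longrightarrow> (\<forall>i<n. c i = 0)"
    and conn: "connected_graph n E"
    and n2: "2 \<le> n"
begin

lemma indep': "(\<And>k. k < n \<Longrightarrow> (\<Sum>i<n. c i * q i k) = 0) \<Longrightarrow> i < n \<Longrightarrow> c i = 0"
  using indepq[THEN spec, of c] by auto

lemma eig_q: "i < n \<Longrightarrow> eig (d i) (q i)"
  unfolding eig_def Mx_def using eigq by auto

lemma q_nz: assumes i: "i < n" shows "\<exists>k<n. q i k \<noteq> 0"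
proof (rule ccontr)
  assume "\<not> ?thesis"
  hence "\<And>k. k < n \<Longrightarrow> (\<Sum>i'<n. (if i' = i then 1 else 0) * q i' k) = 0"
    using i by (simp add: if_distrib cong: if_cong)
  from indep'[of "\<lambda>i'. if i' = i then 1 else 0", OF this i] show False by simp
qed

lemma lin_comb_eig:
  assumes "\<forall>k<n. x k = (\<Sum>i<n. c i * q i k)"
  shows "\<forall>k<n. Mx x k = (\<Sum>i<n. c i * d i * q i k)"
proof (intro allI impI)
  fix k assume k: "k < n"
  have "Mx x k = Mx (\<lambda>j. \<Sum>i<n. c i * q i j) k" using assms by (intro Mx_cong) auto
  also have "\<dots> = (\<Sum>i<n. Mx (\<lambda>j. c i * q i j) k)" by (rule Mx_sum) simp
  also have "\<dots> = (\<Sum>i<n. c i * Mx (q i) k)"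
    using Mx_lin[of _ _ 0 "\<lambda>_. 0"] by simp
  also have "\<dots> = (\<Sum>i<n. c i * d i * q i k)"
    using eig_q k unfolding eig_def by (intro sum.cong refl) auto
  finally show "Mx x k = (\<Sum>i<n. c i * d i * q i k)" .
qed

lemma eigenvalue_d: "eigenvalue (laplacian n E) \<mu> \<longleftrightarrow> (\<exists>i<n. d i = \<mu>)"
proof
  assume "eigenvalue (laplacian n E) \<mu>"
  then obtain x k0 where k0: "k0 < n" "x k0 \<noteq> 0" and e: "eig \<mu> x" unfolding eigenvalue_iff by auto
  obtain c where c: "\<forall>k<n. x k = (\<Sum>i<n. c i * q i k)" using spanq by blast
  have h: "\<forall>k<n. (\<Sum>i<n. (c i * (d i - \<mu>)) * q i k) = 0"
  proof (intro allI impI)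
    fix k assume k: "k < n"
    have "(\<Sum>i<n. (c i * (d i - \<mu>)) * q i k) = (\<Sum>i<n. c i * d i * q i k) - \<mu> * (\<Sum>i<n. c i * q i k)"
      by (simp add: algebra_simps sum_subtractf sum_distrib_left)
    also have "\<dots> = Mx x k - \<mu> * x k" using lin_comb_eig[OF c] c k by simp
    also have "\<dots> = 0" using e k unfolding eig_def by simp
    finally show "(\<Sum>i<n. (c i * (d i - \<mu>)) * q i k) = 0" .
  qed
  have z: "\<forall>i<n. c i * (d i - \<mu>) = 0"
  proof (intro allI impI)
    fix i assume i: "i < n"
    show "c i * (d i - \<mu>) = 0"
      using indep'[of "\<lambda>i. c i * (d i - \<mu>)" i, OF h[rule_format] i] .
  qed
  show "\<exists>i<n. d i = \<mu>"
  proof (rule ccontr)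
    assume "\<not> ?thesis"
    with z have "\<forall>i<n. c i = 0" by auto
    hence "x k0 = 0" using c k0 by simp
    with k0 show False by simp
  qed
next
  assume "\<exists>i<n. d i = \<mu>"
  then obtain i where "i < n" "d i = \<mu>" by auto
  thus "eigenvalue (laplacian n E) \<mu>" unfolding eigenvalue_iff using eig_q q_nz by blast
qed

lemma eig_mult_d: "eig_mult (laplacian n E) \<mu> = card {i. i < n \<and> d i = \<mu>}"
  unfolding eig_mult_def using ordq by simp

lemma eig_nonneg: assumes e: "eig \<mu> x" and k: "k < n" "x k \<noteq> 0" shows "\<mu> \<ge> 0"
proof -
  have "ip x (Mx x) = \<mu> * ip x x" using e unfolding eig_def ip_def
    by (simp add: sum_distrib_left algebra_simps)
  moreover have "ip x x > 0" using ip_self_nonneg[of x] ip_self_zero[of x] k by force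
  ultimately show ?thesis using quad_nonneg[of x] by (simp add: zero_le_mult_iff)
qed

lemma d_nonneg: "i < n \<Longrightarrow> d i \<ge> 0"
  using q_nz eig_q eig_nonneg by blast

lemma edge_eq: assumes e: "eig 0 x" shows "\<And>k j. k < n \<Longrightarrow> j < n \<Longrightarrow> E k j \<Longrightarrow> x k = x j"
proof -
  have "ip x (Mx x) = 0" using e unfolding eig_def ip_def by simp
  hence "(\<Sum>k<n. \<Sum>j<n. if E k j then (x k - x j)^2 else 0) = 0" unfolding quad by simp
  hence h: "\<forall>k\<in>{..<n}. (\<Sum>j<n. if E k j then (x k - x j)^2 else 0) = 0"
    by (subst (asm) sum_nonneg_eq_0_iff) (auto intro!: sum_nonneg)
  fix k j assume k: "k < n" and j: "j < n" and E: "E k j"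
  from h k have "(\<Sum>j<n. if E k j then (x k - x j)^2 else 0) = 0" by auto
  hence "\<forall>j\<in>{..<n}. (if E k j then (x k - x j)^2 else 0) = 0"
    by (subst (asm) sum_nonneg_eq_0_iff) auto
  with j E have "(x k - x j)^2 = 0" by force
  thus "x k = x j" by simp
qed

lemma ker_const: assumes e: "eig 0 x" and k: "k < n" shows "x k = x 0"
proof -
  let ?G = "\<lambda>a b. a < n \<and> b < n \<and> E a b"
  have "?G\<^sup>*\<^sup>* 0 k" using conn k n2 unfolding connected_graph_def by auto
  thus ?thesis
  proof (induct rule: rtranclp_induct)
    case (step b c)
    thus ?case using edge_eq[OF e, of b c] by auto
  qed simp
qed

lemma mult0: assumes i0: "i0 < n" "d i0 = 0" shows "{i. i < n \<and> d i = 0} = {i0}"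
proof -
  have uniq: "i = i0" if i: "i < n" "d i = 0" for i
  proof (rule ccontr)
    assume ne: "i \<noteq> i0"
    obtain k where k: "k < n" "q i k \<noteq> 0" using q_nz i by auto
    obtain k' where k': "k' < n" "q i0 k' \<noteq> 0" using q_nz \<open>i0 < n\<close> by auto
    define a where "a = q i 0"
    define b where "b = q i0 0"
    have qa: "q i j = a" if "j < n" for j using ker_const eig_q i that unfolding a_def by metis
    have qb: "q i0 j = b" if "j < n" for j using ker_const eig_q \<open>i0 < n\<close> \<open>d i0 = 0\<close> that
      unfolding b_def by metis
    have a0: "a \<noteq> 0" using qa k by auto
    define c where "c j = (if j = i then b else if j = i0 then - a else 0)" for j
    have "\<forall>k<n. (\<Sum>j<n. c j * q j k) = 0"
    proof (intro allI impI)
      fix k assume k: "k < n"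
      have "(\<Sum>j<n. c j * q j k) = (\<Sum>j<n. (if j = i then b * a else 0) + (if j = i0 then - a * b else 0))"
        unfolding c_def using qa qb k ne by (intro sum.cong refl) auto
      also have "\<dots> = 0" using i \<open>i0 < n\<close> by (simp add: sum.distrib sum.delta)
      finally show "(\<Sum>j<n. c j * q j k) = 0" .
    qed
    hence "c i0 = 0" using indep'[of c i0] \<open>i0 < n\<close> by blast
    with ne a0 show False unfolding c_def by simp
  qed
  show ?thesis
  proof (intro equalityI subsetI)
    fix i
    assume "i \<in> {i. i < n \<and> d i = 0}"
    hence "i = i0" using uniq by blast
    thus "i \<in> {i0}" by simp
  next
    fix i
    assume "i \<in> {i0}"
    thus "i \<in> {i. i < n \<and> d i = 0}" using i0 by simp
  qed
qed

lemma exists0: "\<exists>i0<n. d i0 = 0"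
proof -
  have e1: "eig 0 (\<lambda>_. 1)" unfolding eig_def using Mx_const by simp
  have "eigenvalue (laplacian n E) 0" unfolding eigenvalue_iff
    using e1 n2 by (intro exI[of _ "\<lambda>_. 1::real"] conjI exI[of _ 0]) auto
  thus ?thesis unfolding eigenvalue_d .
qed

lemma cum_sum: "(\<Sum>x\<in>{x. eigenvalue (laplacian n E) x \<and> x \<le> \<mu>}. eig_mult (laplacian n E) x)
   = card {i. i < n \<and> d i \<le> \<mu>}"
proof -
  define T where "T = {i. i < n \<and> d i \<le> \<mu>}"
  have fT: "finite T" unfolding T_def by (rule finite_subset[of _ "{..<n}"]) auto
  have set: "{x. eigenvalue (laplacian n E) x \<and> x \<le> \<mu>} = d ` T"
  proof (intro equalityI subsetI)
    fix x assume "x \<in> {x. eigenvalue (laplacian n E) x \<and> x \<le> \<mu>}"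
    then obtain i where "i < n" "d i = x" "x \<le> \<mu>" unfolding eigenvalue_d by auto
    thus "x \<in> d ` T" unfolding T_def by auto
  next
    fix x assume "x \<in> d ` T"
    then obtain i where "i < n" "d i \<le> \<mu>" "x = d i" unfolding T_def by auto
    thus "x \<in> {x. eigenvalue (laplacian n E) x \<and> x \<le> \<mu>}" unfolding eigenvalue_d by auto
  qed
  have "card T = (\<Sum>i\<in>T. 1)" by simp
  also have "\<dots> = (\<Sum>y\<in>d ` T. \<Sum>i\<in>{i. i \<in> T \<and> d i = y}. 1)" by (rule sum.image_gen[OF fT])
  also have "\<dots> = (\<Sum>y\<in>d ` T. card {i. i < n \<and> d i = y})"
  proof (intro sum.cong refl)
    fix y assume "y \<in> d ` T"
    then obtain j where j: "j \<in> T" "y = d j" by auto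
    have "{i. i \<in> T \<and> d i = y} = {i. i < n \<and> d i = y}" using j unfolding T_def by auto
    thus "(\<Sum>i\<in>{i. i \<in> T \<and> d i = y}. 1) = card {i. i < n \<and> d i = y}" by simp
  qed
  finally show ?thesis unfolding set eig_mult_d T_def by simp
qed

definition "mu2 = kth_eigenvalue (laplacian n E) 2"

definition "S2 = {\<mu>. \<mu> \<in> d ` {..<n} \<and> 2 \<le> card {i. i < n \<and> d i \<le> \<mu>}}"

lemma mu2_S2: "mu2 = Min S2"
proof -
  have img: "\<And>\<mu>. \<mu> \<in> d ` {..<n} \<longleftrightarrow> (\<exists>i<n. d i = \<mu>)" by auto
  have "{\<mu>. eigenvalue (laplacian n E) \<mu> \<and>
      (\<Sum>x\<in>{x. eigenvalue (laplacian n E) x \<and> x \<le> \<mu>}. eig_mult (laplacian n E) x) \<ge> 2} = {\<mu>. \<mu> \<in> d ` {..<n} \<and> 2 \<le> card {i. i < n \<and> d i \<le> \<mu>}}"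
  proof (intro Collect_cong)
    fix \<mu>
    show "(eigenvalue (laplacian n E) \<mu> \<and>
      (\<Sum>x\<in>{x. eigenvalue (laplacian n E) x \<and> x \<le> \<mu>}. eig_mult (laplacian n E) x) \<ge> 2) = (\<mu> \<in> d ` {..<n} \<and> 2 \<le> card {i. i < n \<and> d i \<le> \<mu>})"
      unfolding cum_sum[of \<mu>] eigenvalue_d[of \<mu>] img by (rule refl)
  qed
  thus ?thesis unfolding mu2_def kth_eigenvalue_def S2_def by simp
qed

lemma S2_fin: "finite S2" unfolding S2_def by (rule finite_subset[of _ "d ` {..<n}"]) auto

lemma S2_ne: "S2 \<noteq> {}"
proof -
  define m where "m = Max (d ` {..<n})"
  have "m \<in> d ` {..<n}" unfolding m_def using n2 by (intro Max_in) (auto simp: lessThan_empty_iff)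
  moreover have "{i. i < n \<and> d i \<le> m} = {..<n}" unfolding m_def by auto
  ultimately have "m \<in> S2" unfolding S2_def using n2 by auto
  thus ?thesis by auto
qed

lemma mu2_in: "mu2 \<in> S2" unfolding mu2_S2 using S2_fin S2_ne by (rule Min_in)

lemma mu2_eigen: "\<exists>i<n. d i = mu2" using mu2_in unfolding S2_def by auto

lemma mu2_pos: "mu2 > 0"
proof -
  obtain i0 where i0: "i0 < n" "d i0 = 0" using exists0 by auto
  obtain i where i: "i < n" "d i = mu2" using mu2_eigen by auto
  have ge: "mu2 \<ge> 0" using d_nonneg[OF i(1)] i(2) by simp
  show ?thesis
  proof (rule ccontr)
    assume "\<not> ?thesis"
    hence m0: "mu2 = 0" using ge by simp
    have "{i. i < n \<and> d i \<le> mu2} = {i. i < n \<and> d i = 0}"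
    proof (intro Collect_cong)
      fix i show "(i < n \<and> d i \<le> mu2) = (i < n \<and> d i = 0)"
        using d_nonneg[of i] m0 by auto
    qed
    also have "\<dots> = {i0}" using mult0 i0 by simp
    finally have "card {i. i < n \<and> d i \<le> mu2} = 1" by simp
    with mu2_in show False unfolding S2_def by simp
  qed
qed

lemma mu2_le: assumes i: "i < n" "d i \<noteq> 0" shows "mu2 \<le> d i"
proof -
  obtain i0 where i0: "i0 < n" "d i0 = 0" using exists0 by auto
  have "{i0, i} \<subseteq> {j. j < n \<and> d j \<le> d i}" using i(1) i0 d_nonneg[OF i(1)] by auto
  hence c1: "card {i0, i} \<le> card {j. j < n \<and> d j \<le> d i}" by (intro card_mono) auto
  have "i \<noteq> i0" using i i0 by auto
  hence "card {i0, i} = 2" by simp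
  with c1 have "d i \<in> S2" unfolding S2_def using i by auto
  thus ?thesis unfolding mu2_S2 by (rule Min_le[OF S2_fin])
qed

end

lemma underdet:
  fixes f :: "'s \<Rightarrow> 'i \<Rightarrow> real"
  assumes "finite S" "finite I" "card S < card I"
  shows "\<exists>c. (\<exists>i\<in>I. c i \<noteq> 0) \<and> (\<forall>s\<in>S. (\<Sum>i\<in>I. c i * f s i) = 0)"
  using assms
proof (induct S arbitrary: I f rule: finite_induct)
  case empty
  then obtain i where "i \<in> I" by fastforce
  thus ?case by (intro exI[of _ "\<lambda>_. 1"]) auto
next
  case (insert s0 S)
  show ?case
  proof (cases "\<forall>i\<in>I. f s0 i = 0")
    case True
    have "card S < card I" using insert by simp
    from insert(3)[OF insert(4) this, of f] obtain c where
      c: "\<exists>i\<in>I. c i \<noteq> 0" "\<forall>s\<in>S. (\<Sum>i\<in>I. c i * f s i) = 0" by blast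
    have "(\<Sum>i\<in>I. c i * f s0 i) = 0" using True by simp
    thus ?thesis using c by (intro exI[of _ c]) auto
  next
    case False
    then obtain i0 where i0: "i0 \<in> I" "f s0 i0 \<noteq> 0" by auto
    define I' where "I' = I - {i0}"
    define g where "g s i = f s i - f s i0 * f s0 i / f s0 i0" for s i
    have fI': "finite I'" unfolding I'_def using insert by simp
    have cI': "card S < card I'" unfolding I'_def using insert i0 by simp
    from insert(3)[OF fI' cI', of g] obtain c' where
      c': "\<exists>i\<in>I'. c' i \<noteq> 0" "\<forall>s\<in>S. (\<Sum>i\<in>I'. c' i * g s i) = 0" by blast
    define c where "c i = (if i = i0 then - (\<Sum>i\<in>I'. c' i * f s0 i) / f s0 i0 else c' i)" for i
    have split: "(\<Sum>i\<in>I. c i * f s i) = c i0 * f s i0 + (\<Sum>i\<in>I'. c' i * f s i)" for s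
    proof -
      have "(\<Sum>i\<in>I. c i * f s i) = c i0 * f s i0 + (\<Sum>i\<in>I'. c i * f s i)"
        unfolding I'_def by (rule sum.remove[OF insert(4) i0(1)])
      also have "(\<Sum>i\<in>I'. c i * f s i) = (\<Sum>i\<in>I'. c' i * f s i)"
        unfolding c_def I'_def by (intro sum.cong) auto
      finally show ?thesis .
    qed
    have "\<exists>i\<in>I. c i \<noteq> 0" using c'(1) unfolding c_def I'_def by auto
    moreover have "\<forall>s\<in>insert s0 S. (\<Sum>i\<in>I. c i * f s i) = 0"
    proof
      fix s assume s: "s \<in> insert s0 S"
      show "(\<Sum>i\<in>I. c i * f s i) = 0"
      proof (cases "s = s0")
        case True
        thus ?thesis unfolding split[of s] using i0 by (simp add: c_def)
      next
        case False
        hence sS: "s \<in> S" using s by simp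
        have "(\<Sum>i\<in>I'. c' i * g s i) = (\<Sum>i\<in>I'. c' i * f s i) - f s i0 * (\<Sum>i\<in>I'. c' i * f s0 i) / f s0 i0"
          unfolding g_def by (simp add: algebra_simps sum_subtractf sum_distrib_left sum_divide_distrib)
        hence "(\<Sum>i\<in>I'. c' i * f s i) - f s i0 * (\<Sum>i\<in>I'. c' i * f s0 i) / f s0 i0 = 0"
          using c'(2) sS by simp
        thus ?thesis unfolding split[of s] by (simp add: c_def algebra_simps)
      qed
    qed
    ultimately show ?thesis by blast
  qed
qed

context spgraph
begin

lemma ip_cong: "(\<And>k. k < n \<Longrightarrow> x k = x' k) \<Longrightarrow> ip x y = ip x' y"
  unfolding ip_def by simp

lemma ip_eig: "eig a x \<Longrightarrow> ip z (Mx x) = a * ip z x"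
  unfolding ip_def eig_def by (simp add: sum_distrib_left algebra_simps)

lemma eig_orth: assumes "eig a x" "eig b z" "a \<noteq> b" shows "ip x z = 0"
proof -
  have "ip z (Mx x) = ip x (Mx z)" by (rule ip_M_sym)
  hence "a * ip z x = b * ip x z" using ip_eig assms by simp
  hence "(a - b) * ip x z = 0" using ip_sym[of z x] by (simp add: algebra_simps)
  thus ?thesis using assms by simp
qed

lemma ip_sum_sum: "finite A \<Longrightarrow> finite B \<Longrightarrow>
  ip (\<lambda>k. \<Sum>a\<in>A. f a k) (\<lambda>k. \<Sum>b\<in>B. g b k) = (\<Sum>a\<in>A. \<Sum>b\<in>B. ip (f a) (g b))"
  unfolding ip_def by (simp add: sum_product sum.swap[of _ "{..<n}"])

lemma mult_bound:
  assumes fin: "finite S"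
    and inj: "\<And>x. eig \<mu> x \<Longrightarrow> (\<forall>s\<in>S. x s = 0) \<Longrightarrow> \<forall>k<n. x k = 0"
  shows "eig_mult (laplacian n E) \<mu> \<le> card S"
proof (rule ccontr)
  define I where "I = {i. i < n \<and> d i = \<mu>}"
  have fI: "finite I" unfolding I_def by (rule finite_subset[of _ "{..<n}"]) auto
  assume "\<not> ?thesis"
  hence "card S < card I" unfolding eig_mult_d I_def by simp
  from underdet[OF fin fI this, of "\<lambda>s i. q i s"] obtain c where
    c: "\<exists>i\<in>I. c i \<noteq> 0" "\<forall>s\<in>S. (\<Sum>i\<in>I. c i * q i s) = 0" by blast
  define c' where "c' i = (if i \<in> I then c i else 0)" for i
  define x where "x k = (\<Sum>i<n. c' i * q i k)" for k
  have xI: "x k = (\<Sum>i\<in>I. c i * q i k)" for k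
  proof -
    have "x k = (\<Sum>i\<in>{..<n}. if i \<in> I then c i * q i k else 0)"
      unfolding x_def c'_def by (intro sum.cong) auto
    also have "\<dots> = (\<Sum>i\<in>{..<n} \<inter> I. c i * q i k)" by (simp add: sum.If_cases)
    also have "{..<n} \<inter> I = I" unfolding I_def by auto
    finally show ?thesis .
  qed
  have "eig \<mu> x" unfolding eig_def
  proof (intro allI impI)
    fix k assume k: "k < n"
    have "Mx x k = (\<Sum>i<n. c' i * d i * q i k)" using lin_comb_eig[of x c'] x_def k by simp
    also have "\<dots> = (\<Sum>i<n. \<mu> * (c' i * q i k))"
      unfolding c'_def I_def by (intro sum.cong) auto
    finally show "Mx x k = \<mu> * x k" unfolding x_def by (simp add: sum_distrib_left)
  qed
  moreover have "\<forall>s\<in>S. x s = 0" using c(2) xI by simp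
  ultimately have x0: "\<forall>k<n. x k = 0" by (rule inj)
  obtain i where i: "i \<in> I" "c i \<noteq> 0" using c(1) by auto
  have "c' i = 0" using indep'[of c' i] x0 i unfolding x_def I_def by auto
  with i show False unfolding c'_def by simp
qed

end

context spgraph
begin

lemma ip_cong2: "(\<And>k. k < n \<Longrightarrow> y k = y' k) \<Longrightarrow> ip x y = ip x y'"
  unfolding ip_def by simp

lemma ip_scale2: "ip x (\<lambda>k. a * y k) = a * ip x y"
  unfolding ip_def by (simp add: sum_distrib_left algebra_simps)

lemma rayleigh:
  assumes s0: "(\<Sum>k<n. y k) = 0" and le: "ip y (Mx y) \<le> mu2 * ip y y"
  shows "eig mu2 y"
proof -
  obtain c where c: "\<forall>k<n. y k = (\<Sum>i<n. c i * q i k)" using spanq by blast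
  define D where "D = d ` {..<n}"
  have fD: "finite D" unfolding D_def by simp
  define z where "z l k = (\<Sum>i<n. (if d i = l then c i else 0) * q i k)" for l k
  have ez: "eig l (z l)" for l
  proof -
    have h: "\<forall>k<n. Mx (z l) k = (\<Sum>i<n. (if d i = l then c i else 0) * d i * q i k)"
      by (rule lin_comb_eig) (simp add: z_def)
    show ?thesis unfolding eig_def
    proof (intro allI impI)
      fix k assume k: "k < n"
      have "Mx (z l) k = (\<Sum>i<n. (if d i = l then c i else 0) * d i * q i k)" using h k by simp
      also have "\<dots> = (\<Sum>i<n. l * ((if d i = l then c i else 0) * q i k))"
        by (intro sum.cong refl) auto
      also have "\<dots> = l * z l k" unfolding z_def by (simp add: sum_distrib_left)
      finally show "Mx (z l) k = l * z l k" .
    qed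
  qed
  have yz: "y k = (\<Sum>l\<in>D. z l k)" if k: "k < n" for k
  proof -
    have "(\<Sum>l\<in>D. z l k) = (\<Sum>l\<in>D. \<Sum>i<n. if d i = l then c i * q i k else 0)"
      unfolding z_def by (intro sum.cong refl) auto
    also have "\<dots> = (\<Sum>i<n. \<Sum>l\<in>D. if d i = l then c i * q i k else 0)" by (rule sum.swap)
    also have "\<dots> = (\<Sum>i<n. c i * q i k)"
    proof (intro sum.cong refl)
      fix i assume i: "i \<in> {..<n}"
      have "d i \<in> D" unfolding D_def using i by auto
      thus "(\<Sum>l\<in>D. if d i = l then c i * q i k else 0) = c i * q i k"
        using sum.delta'[OF fD, of "d i" "\<lambda>_. c i * q i k"] by simp
    qed
    finally show ?thesis using c k by simp
  qed
  obtain i0 where i0: "i0 < n" "d i0 = 0" using exists0 by auto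
  have D0: "0 \<in> D" unfolding D_def using i0 by force
  have e1: "eig 0 (\<lambda>_. 1)" unfolding eig_def using Mx_const by simp
  have z0: "z 0 k = 0" if k: "k < n" for k
  proof -
    have sz: "(\<Sum>k<n. z l k) = 0" if "l \<noteq> 0" for l
    proof -
      have "ip (z l) (\<lambda>_. 1) = 0" by (rule eig_orth[OF ez e1 that])
      thus ?thesis unfolding ip_def by simp
    qed
    have "0 = (\<Sum>k<n. y k)" using s0 by simp
    also have "\<dots> = (\<Sum>k<n. \<Sum>l\<in>D. z l k)" using yz by simp
    also have "\<dots> = (\<Sum>l\<in>D. \<Sum>k<n. z l k)" by (rule sum.swap)
    also have "\<dots> = (\<Sum>l\<in>D. if l = 0 then (\<Sum>k<n. z 0 k) else 0)"
      using sz by (intro sum.cong refl) auto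
    also have "\<dots> = (\<Sum>k<n. z 0 k)" using D0 fD by (simp add: sum.delta)
    also have "\<dots> = (\<Sum>k<n. z 0 0)" by (intro sum.cong refl) (rule ker_const[OF ez[of 0]], simp)
    also have "\<dots> = real n * z 0 0" by simp
    finally have "z 0 0 = 0" using n2 by simp
    thus ?thesis using ker_const[OF ez[of 0] k] by linarith
  qed
  define w where "w l = ip (z l) (z l)" for l
  have orth: "ip (z l) (z l') = (if l = l' then w l else 0)" for l l'
    using eig_orth[OF ez ez] unfolding w_def by auto
  have yy: "ip y y = (\<Sum>l\<in>D. w l)"
  proof -
    have "ip y y = ip (\<lambda>k. \<Sum>l\<in>D. z l k) y" by (rule ip_cong) (rule yz)
    also have "\<dots> = ip (\<lambda>k. \<Sum>l\<in>D. z l k) (\<lambda>k. \<Sum>l\<in>D. z l k)" by (rule ip_cong2) (rule yz)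
    also have "\<dots> = (\<Sum>l\<in>D. \<Sum>l'\<in>D. if l = l' then w l else 0)"
      unfolding ip_sum_sum[OF fD fD] orth ..
    also have "\<dots> = (\<Sum>l\<in>D. w l)" using fD by (simp add: sum.delta)
    finally show ?thesis .
  qed
  have My: "Mx y k = (\<Sum>l\<in>D. l * z l k)" if k: "k < n" for k
  proof -
    have "Mx y k = Mx (\<lambda>j. \<Sum>l\<in>D. z l j) k" using yz by (intro Mx_cong) auto
    also have "\<dots> = (\<Sum>l\<in>D. Mx (z l) k)" by (rule Mx_sum[OF fD])
    also have "\<dots> = (\<Sum>l\<in>D. l * z l k)" using ez k unfolding eig_def by simp
    finally show ?thesis .
  qed
  have yMy: "ip y (Mx y) = (\<Sum>l\<in>D. l * w l)"
  proof -
    have "ip y (Mx y) = ip (\<lambda>k. \<Sum>l\<in>D. z l k) (Mx y)" by (rule ip_cong) (rule yz)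
    also have "\<dots> = ip (\<lambda>k. \<Sum>l\<in>D. z l k) (\<lambda>k. \<Sum>l\<in>D. l * z l k)" by (rule ip_cong2) (rule My)
    also have "\<dots> = (\<Sum>l\<in>D. \<Sum>l'\<in>D. ip (z l) (\<lambda>k. l' * z l' k))"
      by (rule ip_sum_sum[OF fD fD])
    also have "\<dots> = (\<Sum>l\<in>D. \<Sum>l'\<in>D. if l = l' then l * w l else 0)"
      unfolding ip_scale2 orth by (intro sum.cong refl) auto
    also have "\<dots> = (\<Sum>l\<in>D. l * w l)" using fD by (simp add: sum.delta)
    finally show ?thesis .
  qed
  have tnn: "(l - mu2) * w l \<ge> 0" if l: "l \<in> D" for l
  proof (cases "l = 0")
    case True
    have "w l = 0" unfolding w_def True ip_def using z0 by simp
    thus ?thesis by simp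
  next
    case False
    from l obtain i where i: "i < n" "l = d i" unfolding D_def by auto
    have "mu2 \<le> l" using mu2_le[of i] i False by simp
    moreover have "w l \<ge> 0" unfolding w_def by (rule ip_self_nonneg)
    ultimately show ?thesis by simp
  qed
  have "(\<Sum>l\<in>D. (l - mu2) * w l) = ip y (Mx y) - mu2 * ip y y"
    unfolding yMy yy by (simp add: algebra_simps sum_subtractf sum_distrib_left sum_distrib_right)
  hence "(\<Sum>l\<in>D. (l - mu2) * w l) \<le> 0" using le by simp
  moreover have "(\<Sum>l\<in>D. (l - mu2) * w l) \<ge> 0" using tnn by (intro sum_nonneg) auto
  ultimately have "(\<Sum>l\<in>D. (l - mu2) * w l) = 0" by simp
  hence tz: "\<forall>l\<in>D. (l - mu2) * w l = 0" using fD tnn by (subst (asm) sum_nonneg_eq_0_iff) auto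
  have zz: "z l k = 0" if "l \<in> D" "l \<noteq> mu2" "k < n" for l k
  proof (cases "l = 0")
    case True thus ?thesis using z0 that by simp
  next
    case False
    have "w l = 0" using tz that by auto
    thus ?thesis unfolding w_def using ip_self_zero that by auto
  qed
  show ?thesis unfolding eig_def
  proof (intro allI impI)
    fix k assume k: "k < n"
    have "Mx y k = (\<Sum>l\<in>D. l * z l k)" by (rule My[OF k])
    also have "\<dots> = (\<Sum>l\<in>D. mu2 * z l k)"
      using zz k by (intro sum.cong refl) (metis mult_zero_right)
    also have "\<dots> = mu2 * y k" using yz[OF k] by (simp add: sum_distrib_left)
    finally show "Mx y k = mu2 * y k" .
  qed
qed

end

definition grel :: "nat \<Rightarrow> (nat \<Rightarrow> nat \<Rightarrow> bool) \<Rightarrow> nat \<Rightarrow> nat \<Rightarrow> bool" where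
  "grel n E a b \<longleftrightarrow> a < n \<and> b < n \<and> E a b"

definition edge_set :: "nat \<Rightarrow> (nat \<Rightarrow> nat \<Rightarrow> bool) \<Rightarrow> (nat \<times> nat) set" where
  "edge_set n E = {(i, j). i < j \<and> j < n \<and> E i j}"

lemma edge_set_fin: "finite (edge_set n E)"
  unfolding edge_set_def by (rule finite_subset[of _ "{..<n} \<times> {..<n}"]) auto

lemma edges_lb:
  assumes sg: "sgraph n E" and conn: "connected_graph n E" and n1: "1 \<le> n"
  shows "n - 1 \<le> num_edges n E"
proof -
  let ?R = "grel n E"
  have reach: "\<exists>m. (?R ^^ m) 0 k" if "k < n" for k
  proof -
    have "?R\<^sup>*\<^sup>* 0 k" using conn[unfolded connected_graph_def, rule_format, of 0 k] n1 that
      unfolding grel_def by simp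
    thus ?thesis by (rule rtranclp_imp_relpowp)
  qed
  define dist where "dist k = (LEAST m. (?R ^^ m) 0 k)" for k
  have dist: "(?R ^^ dist k) 0 k" if "k < n" for k
    unfolding dist_def using reach[OF that] by (rule LeastI_ex)
  have dist_le: "dist k \<le> m" if "(?R ^^ m) 0 k" for k m
    unfolding dist_def using that by (rule Least_le)
  have par: "\<exists>j. ?R j k \<and> dist j < dist k" if k: "0 < k" "k < n" for k
  proof -
    have "dist k \<noteq> 0"
    proof
      assume "dist k = 0"
      with dist[OF k(2)] have "k = 0" by simp
      with k show False by simp
    qed
    then obtain m where m: "dist k = Suc m" by (cases "dist k") auto
    with dist[OF k(2)] have "(?R ^^ Suc m) 0 k" by simp
    then obtain j where "(?R ^^ m) 0 j" "?R j k" by (rule relpowp_Suc_E)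
    moreover hence "dist j \<le> m" by (intro dist_le)
    ultimately show ?thesis using m by (intro exI[of _ j]) auto
  qed
  define p where "p k = (SOME j. ?R j k \<and> dist j < dist k)" for k
  have p: "?R (p k) k \<and> dist (p k) < dist k" if "0 < k" "k < n" for k
    unfolding p_def using par[OF that] by (rule someI_ex)
  define \<phi> where "\<phi> k = (min k (p k), max k (p k))" for k
  have inj: "inj_on \<phi> {1..<n}"
  proof (rule inj_onI)
    fix k k' assume k: "k \<in> {1..<n}" and k': "k' \<in> {1..<n}" and eq: "\<phi> k = \<phi> k'"
    have pk: "dist (p k) < dist k" using p[of k] k by auto
    have pk': "dist (p k') < dist k'" using p[of k'] k' by auto
    from eq have "k = k' \<or> (k = p k' \<and> p k = k')" unfolding \<phi>_def
      by (auto simp: min_def max_def split: if_splits)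
    thus "k = k'" using pk pk' by auto
  qed
  have img: "\<phi> ` {1..<n} \<subseteq> edge_set n E"
  proof
    fix e assume "e \<in> \<phi> ` {1..<n}"
    then obtain k where k: "k \<in> {1..<n}" "e = \<phi> k" by auto
    have R: "?R (p k) k" using p[of k] k by auto
    hence ne: "p k \<noteq> k" using sgraph.irrE[OF sg] unfolding grel_def by auto
    have "E k (p k)" using R sgraph.symE[OF sg] unfolding grel_def by auto
    moreover have "E (p k) k" using R unfolding grel_def by auto
    ultimately show "e \<in> edge_set n E" using k R ne unfolding \<phi>_def edge_set_def grel_def
      by (cases "k < p k") (auto simp: min_def max_def)
  qed
  have "card {1..<n} \<le> card (edge_set n E)"
    by (rule card_inj_on_le[OF inj img edge_set_fin])
  thus ?thesis unfolding num_edges_def edge_set_def by simp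
qed

lemma rtranclp_sym:
  assumes "\<And>a b. R a b \<Longrightarrow> R b a" and "R\<^sup>*\<^sup>* x y"
  shows "R\<^sup>*\<^sup>* y x"
  using assms(2)
proof (induct rule: rtranclp_induct)
  case (step b c)
  thus ?case using assms(1) by (meson converse_rtranclp_into_rtranclp)
qed simp

locale tgraph = sgraph +
  assumes tree: "is_tree n E"
begin

definition Rv :: "nat \<Rightarrow> nat \<Rightarrow> nat \<Rightarrow> bool" where
  "Rv v a b \<longleftrightarrow> a < n \<and> b < n \<and> a \<noteq> v \<and> b \<noteq> v \<and> E a b"

lemma Rv_sym: "Rv v a b \<Longrightarrow> Rv v b a"
  unfolding Rv_def using symE by auto

lemma no_cycle:
  assumes v: "v < n" and w1: "w1 < n" and w2: "w2 < n" and e1: "E v w1" and e2: "E v w2"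
    and ne: "w1 \<noteq> w2" and path: "(Rv v)\<^sup>*\<^sup>* w1 w2"
  shows False
proof -
  define E' where "E' a b \<longleftrightarrow> E a b \<and> \<not> ((a = v \<and> b = w1) \<or> (a = w1 \<and> b = v))" for a b
  have sg': "sgraph n E'"
    by unfold_locales (auto simp: E'_def symE irrE)
  have path': "(grel n E')\<^sup>*\<^sup>* w2 w1"
  proof -
    have "(Rv v)\<^sup>*\<^sup>* w2 w1" by (rule rtranclp_sym[of "Rv v", OF Rv_sym path])
    thus ?thesis
    proof (induct rule: rtranclp_induct)
      case (step b c)
      have "grel n E' b c" using step(2) unfolding Rv_def grel_def E'_def by auto
      thus ?case using step(3) by simp
    qed simp
  qed
  have vw1: "(grel n E')\<^sup>*\<^sup>* v w1"
  proof -
    have "grel n E' v w2" using v w2 e2 ne unfolding grel_def E'_def by auto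
    thus ?thesis using path' by (meson converse_rtranclp_into_rtranclp)
  qed
  have w1v: "(grel n E')\<^sup>*\<^sup>* w1 v"
    by (rule rtranclp_sym[OF _ vw1]) (auto simp: grel_def E'_def symE)
  have edge_st: "(grel n E')\<^sup>*\<^sup>* a b" if "grel n E a b" for a b
  proof (cases "(a = v \<and> b = w1) \<or> (a = w1 \<and> b = v)")
    case True thus ?thesis using vw1 w1v by auto
  next
    case False thus ?thesis using that unfolding grel_def E'_def by auto
  qed
  have conn': "connected_graph n E'" unfolding connected_graph_def
  proof (intro allI impI)
    fix i j assume i: "i < n" and j: "j < n"
    have "(grel n E)\<^sup>*\<^sup>* i j" using tree i j unfolding is_tree_def connected_graph_def grel_def by auto
    thus "(\<lambda>x y. x < n \<and> y < n \<and> E' x y)\<^sup>*\<^sup>* i j"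
    proof (induct rule: rtranclp_induct)
      case (step b c)
      from step(3) edge_st[OF step(2)] have "(grel n E')\<^sup>*\<^sup>* i c"
        unfolding grel_def by (metis (no_types, lifting) rtranclp_trans)
      thus ?case unfolding grel_def by simp
    qed simp
  qed
  have n1: "1 \<le> n" using tree unfolding is_tree_def by auto
  have lb: "n - 1 \<le> num_edges n E'" by (rule edges_lb[OF sg' conn' n1])
  define e where "e = (min v w1, max v w1)"
  have vne: "v \<noteq> w1" using irrE v e1 by auto
  have eE: "e \<in> edge_set n E" unfolding e_def edge_set_def using v w1 e1 vne symE
    by (cases "v < w1") (auto simp: min_def max_def)
  have es: "edge_set n E' = edge_set n E - {e}"
    unfolding edge_set_def E'_def e_def using vne by (auto simp: min_def max_def)
  have "num_edges n E' = num_edges n E - 1"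
    using es eE edge_set_fin unfolding num_edges_def edge_set_def[symmetric] by simp
  also have "num_edges n E = n - 1" using tree unfolding is_tree_def by simp
  finally have "num_edges n E' = n - 2" by simp
  moreover have "n \<ge> 2" using v w1 vne by auto
  ultimately show False using lb by simp
qed

definition br :: "nat \<Rightarrow> nat \<Rightarrow> nat set" where
  "br v w = {k. (Rv v)\<^sup>*\<^sup>* w k}"

lemma br_self: "w \<in> br v w" unfolding br_def by simp

lemma br_bound: assumes "w < n" "w \<noteq> v" "k \<in> br v w" shows "k < n \<and> k \<noteq> v"
proof -
  have "(Rv v)\<^sup>*\<^sup>* w k" using assms(3) unfolding br_def by simp
  thus ?thesis
  proof (induct rule: rtranclp_induct)
    case base show ?case using assms(1,2) by simp
  next
    case (step b c) thus ?case unfolding Rv_def by simp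
  qed
qed

lemma br_closed: assumes "w < n" "w \<noteq> v" "k \<in> br v w" "j < n" "E k j" "j \<noteq> v"
  shows "j \<in> br v w"
proof -
  have "k < n" "k \<noteq> v" using br_bound[OF assms(1,2,3)] by auto
  hence "Rv v k j" unfolding Rv_def using assms(4,5,6) by simp
  thus ?thesis using assms(3) unfolding br_def by (simp add: rtranclp.rtrancl_into_rtrancl)
qed

lemma br_cover: assumes v: "v < n" and r: "r < n" "r \<noteq> v"
  shows "\<exists>w. w < n \<and> E v w \<and> r \<in> br v w"
proof -
  have "(grel n E)\<^sup>*\<^sup>* v r" using tree v r unfolding is_tree_def connected_graph_def grel_def by auto
  hence "r = v \<or> (\<exists>w. w < n \<and> E v w \<and> r \<in> br v w)"
  proof (induct rule: rtranclp_induct)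
    case (step b c)
    have c: "c < n" "E b c" "b < n" using step(2) unfolding grel_def by auto
    from step(3) show ?case
    proof
      assume "b = v"
      thus ?thesis using c irrE br_self by (cases "c = v") auto
    next
      assume "\<exists>w. w < n \<and> E v w \<and> b \<in> br v w"
      then obtain w where w: "w < n" "E v w" "b \<in> br v w" by auto
      have "w \<noteq> v" using irrE v w by auto
      thus ?thesis using br_closed[OF w(1) _ w(3) c(1,2)] w by (cases "c = v") auto
    qed
  qed simp
  thus ?thesis using r by auto
qed

lemma br_disj: assumes v: "v < n" and w1: "w1 < n" "E v w1" and w2: "w2 < n" "E v w2"
  and ne: "w1 \<noteq> w2" and k1: "k \<in> br v w1" and k2: "k \<in> br v w2"
  shows False
proof -
  have h1: "(Rv v)\<^sup>*\<^sup>* w1 k" and h2: "(Rv v)\<^sup>*\<^sup>* w2 k" using k1 k2 unfolding br_def by auto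
  have "(Rv v)\<^sup>*\<^sup>* k w2" by (rule rtranclp_sym[of "Rv v", OF Rv_sym h2])
  with h1 have "(Rv v)\<^sup>*\<^sup>* w1 w2" by (rule rtranclp_trans)
  thus False using no_cycle[OF v w1(1) w2(1) w1(2) w2(2) ne] by simp
qed

lemma br_nbr: assumes v: "v < n" and w: "w < n" "E v w" and k: "k \<in> br v w" "k < n" "E v k"
  shows "k = w"
proof (rule ccontr)
  assume "k \<noteq> w"
  thus False using br_disj[OF v w k(2,3) _ k(1) br_self] by auto
qed

end

context sgraph
begin

lemma Mx_minus: "Mx (\<lambda>j. a * x j - b * y j) k = a * Mx x k - b * Mx y k"
  using Mx_lin[of a x "- b" y k] by simp

lemma Q_comb:
  assumes h1: "ip f (Mx g) = 0"
  shows "ip (\<lambda>k. a * f k - b * g k) (Mx (\<lambda>k. a * f k - b * g k))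
     = a^2 * ip f (Mx f) + b^2 * ip g (Mx g)"
proof -
  have h2: "ip g (Mx f) = 0" using h1 ip_M_sym[of g f] by simp
  have "ip (\<lambda>k. a * f k - b * g k) (Mx (\<lambda>k. a * f k - b * g k))
      = (\<Sum>k<n. (a^2 * (f k * Mx f k) + b^2 * (g k * Mx g k)) - (a * b * (f k * Mx g k) + a * b * (g k * Mx f k)))"
    unfolding ip_def Mx_minus by (intro sum.cong refl) (simp add: algebra_simps power2_eq_square)
  also have "\<dots> = a^2 * ip f (Mx f) + b^2 * ip g (Mx g) - (a * b * ip f (Mx g) + a * b * ip g (Mx f))"
    unfolding ip_def by (simp add: sum_subtractf sum.distrib sum_distrib_left)
  finally show ?thesis using h1 h2 by simp
qed

lemma ip_comb:
  assumes h1: "ip f g = 0"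
  shows "ip (\<lambda>k. a * f k - b * g k) (\<lambda>k. a * f k - b * g k) = a^2 * ip f f + b^2 * ip g g"
proof -
  have "ip (\<lambda>k. a * f k - b * g k) (\<lambda>k. a * f k - b * g k)
      = (\<Sum>k<n. (a^2 * (f k * f k) + b^2 * (g k * g k)) - (2 * a * b) * (f k * g k))"
    unfolding ip_def by (intro sum.cong refl) (simp add: algebra_simps power2_eq_square)
  also have "\<dots> = a^2 * ip f f + b^2 * ip g g - (2 * a * b) * ip f g"
    unfolding ip_def by (simp add: sum_subtractf sum.distrib sum_distrib_left)
  finally show ?thesis using h1 by simp
qed

lemma Q_abs: "ip (\<lambda>k. \<bar>u k\<bar>) (Mx (\<lambda>k. \<bar>u k\<bar>)) \<le> ip u (Mx u)"
proof -
  have "(\<Sum>k<n. \<Sum>j<n. if E k j then (\<bar>u k\<bar> - \<bar>u j\<bar>)^2 else 0) \<le> (\<Sum>k<n. \<Sum>j<n. if E k j then (u k - u j)^2 else 0)"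
  proof (intro sum_mono)
    fix k j
    have "\<bar>\<bar>u k\<bar> - \<bar>u j\<bar>\<bar> \<le> \<bar>u k - u j\<bar>" by (rule abs_triangle_ineq3)
    hence "(\<bar>u k\<bar> - \<bar>u j\<bar>)^2 \<le> (u k - u j)^2"
      by (metis abs_ge_zero power2_abs power_mono)
    thus "(if E k j then (\<bar>u k\<bar> - \<bar>u j\<bar>)^2 else 0) \<le> (if E k j then (u k - u j)^2 else 0)" by simp
  qed
  thus ?thesis unfolding quad by (simp add: divide_right_mono)
qed

lemma nbr_sum: assumes "eig \<mu> y" "v < n" "y v = 0"
  shows "(\<Sum>j<n. if E v j then y j else 0) = 0"
proof -
  have "Mx y v = 0" using assms unfolding eig_def by simp
  moreover have "Mx y v = - (\<Sum>j<n. if E v j then y j else 0)"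
    unfolding Mx_expand2[OF assms(2)] using assms(3) by (simp add: sum_negf[symmetric] if_distrib cong: if_cong)
  ultimately show ?thesis by simp
qed

end

locale stree = spgraph + tgraph
begin

definition rst :: "nat set \<Rightarrow> (nat \<Rightarrow> real) \<Rightarrow> nat \<Rightarrow> real" where
  "rst B x k = (if k \<in> B then x k else 0)"

lemma supp_out:
  assumes v: "v < n" and w: "w < n" "E v w"
    and supp: "\<And>k. k \<notin> br v w \<Longrightarrow> p k = 0"
    and k: "k < n" "k \<notin> br v w" "k \<noteq> v"
  shows "Mx p k = 0"
proof -
  have wv: "w \<noteq> v" using irrE v w by auto
  have "Mx p k = (\<Sum>j<n. if E k j then p k - p j else 0)" by (rule Mx_expand2[OF k(1)])
  also have "\<dots> = (\<Sum>j<n. 0)"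
  proof (intro sum.cong refl)
    fix j assume j: "j \<in> {..<n}"
    have "p j = 0" if "E k j"
    proof (rule ccontr)
      assume "p j \<noteq> 0"
      hence jB: "j \<in> br v w" using supp by blast
      have jv: "j \<noteq> v" using br_bound[OF w(1) wv jB] by simp
      have "E j k" using symE that j k(1) by auto
      hence "k \<in> br v w" using br_closed[OF w(1) wv jB k(1) _ k(3)] by simp
      with k(2) show False by simp
    qed
    thus "(if E k j then p k - p j else 0) = 0" using supp[OF k(2)] by simp
  qed
  finally show ?thesis by simp
qed

lemma supp_v:
  assumes v: "v < n" and w: "w < n" "E v w"
    and supp: "\<And>k. k \<notin> br v w \<Longrightarrow> p k = 0"
  shows "Mx p v = - p w"
proof -
  have wv: "w \<noteq> v" using irrE v w by auto
  have pv: "p v = 0" using supp br_bound[OF w(1) wv] by blast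
  have "Mx p v = (\<Sum>j<n. if E v j then p v - p j else 0)" by (rule Mx_expand2[OF v])
  also have "\<dots> = (\<Sum>j<n. if j = w then - p w else 0)"
  proof (intro sum.cong refl)
    fix j assume j: "j \<in> {..<n}"
    show "(if E v j then p v - p j else 0) = (if j = w then - p w else 0)"
    proof (cases "j = w")
      case True thus ?thesis using w pv by simp
    next
      case False
      have "p j = 0" if "E v j"
      proof (rule ccontr)
        assume "p j \<noteq> 0"
        hence jB: "j \<in> br v w" using supp by blast
        have "j = w" using br_nbr[OF v w jB] j that by simp
        with False show False by simp
      qed
      thus ?thesis using False pv by simp
    qed
  qed
  also have "\<dots> = - p w" using w by (simp add: sum.delta)
  finally show ?thesis .
qed

lemma restr_in:
  assumes v: "v < n" and w: "w < n" "E v w" and x: "eig mu2 x" and xv: "x v = 0"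
    and k: "k \<in> br v w"
  shows "Mx (rst (br v w) x) k = mu2 * rst (br v w) x k"
proof -
  have wv: "w \<noteq> v" using irrE v w by auto
  have kn: "k < n" "k \<noteq> v" using br_bound[OF w(1) wv k] by auto
  have "Mx (rst (br v w) x) k = (\<Sum>j<n. if E k j then rst (br v w) x k - rst (br v w) x j else 0)"
    by (rule Mx_expand2[OF kn(1)])
  also have "\<dots> = (\<Sum>j<n. if E k j then x k - x j else 0)"
  proof (intro sum.cong refl)
    fix j assume j: "j \<in> {..<n}"
    show "(if E k j then rst (br v w) x k - rst (br v w) x j else 0) = (if E k j then x k - x j else 0)"
    proof (cases "E k j")
      case True
      show ?thesis
      proof (cases "j = v")
        case True thus ?thesis using k xv br_bound[OF w(1) wv] unfolding rst_def by auto
      next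
        case False
        hence "j \<in> br v w" using br_closed[OF w(1) wv k] j \<open>E k j\<close> by simp
        thus ?thesis using k unfolding rst_def by simp
      qed
    qed simp
  qed
  also have "\<dots> = Mx x k" by (rule Mx_expand2[OF kn(1), symmetric])
  also have "\<dots> = mu2 * x k" using x kn unfolding eig_def by simp
  finally show ?thesis using k unfolding rst_def by simp
qed

lemma lemA:
  assumes v: "v < n" and w: "w < n" "E v w" and x: "eig mu2 x" and xv: "x v = 0" and xw: "x w \<noteq> 0"
    and y: "eig mu2 y"
  shows "y v = 0"
proof -
  have wv: "w \<noteq> v" using irrE v w by auto
  define B where "B = br v w"
  define u where "u = rst B x"
  have supp: "\<And>k. k \<notin> br v w \<Longrightarrow> u k = 0" unfolding u_def rst_def B_def by simp
  have uw: "u w = x w" unfolding u_def rst_def B_def using br_self by simp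
  have "ip y (Mx u) = ip u (Mx y)" by (rule ip_M_sym)
  also have "\<dots> = mu2 * ip u y" by (rule ip_eig[OF y])
  finally have e: "ip y (Mx u) = mu2 * ip u y" .
  have "ip y (Mx u) = (\<Sum>k<n. mu2 * (u k * y k) + (if k = v then - (y v * x w) else 0))"
    unfolding ip_def
  proof (intro sum.cong refl)
    fix k assume k: "k \<in> {..<n}"
    show "y k * Mx u k = mu2 * (u k * y k) + (if k = v then - (y v * x w) else 0)"
    proof (cases "k \<in> B")
      case True
      have "k \<noteq> v" using br_bound[OF w(1) wv] True unfolding B_def by blast
      thus ?thesis using restr_in[OF v w x xv, of k] True unfolding u_def B_def by simp
    next
      case False
      show ?thesis
      proof (cases "k = v")
        case True
        thus ?thesis using supp_v[OF v w supp] uw supp[of v] br_bound[OF w(1) wv] by auto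
      next
        case kv: False
        have kn: "k < n" using k by simp
        have "Mx u k = 0" by (rule supp_out[OF v w supp kn]) (use False kv in \<open>simp_all add: B_def\<close>)
        moreover have "u k = 0" using supp False unfolding B_def by simp
        ultimately show ?thesis using kv by simp
      qed
    qed
  qed
  also have "\<dots> = mu2 * ip u y - y v * x w"
    unfolding ip_def using v by (simp add: sum.distrib sum_distrib_left sum.delta)
  finally have "y v * x w = 0" using e by simp
  thus ?thesis using xw by simp
qed

lemma propagate:
  assumes v: "v < n" and w: "w < n" "E v w"
    and pnn: "\<And>k. p k \<ge> 0" and pw: "p w = 0"
    and pe: "\<And>k. k \<in> br v w \<Longrightarrow> Mx p k = mu2 * p k"
    and k: "k \<in> br v w"
  shows "p k = 0"
proof -
  have wv: "w \<noteq> v" using irrE v w by auto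
  have "(Rv v)\<^sup>*\<^sup>* w k" using k unfolding br_def by simp
  thus ?thesis
  proof (induct rule: rtranclp_induct)
    case base show ?case by (rule pw)
  next
    case (step b c)
    have bB: "b \<in> br v w" using step(1) unfolding br_def by simp
    have bc: "b < n" "c < n" "E b c" using step(2) unfolding Rv_def by auto
    have "Mx p b = 0" using pe[OF bB] step(3) by simp
    moreover have "Mx p b = - (\<Sum>j<n. if E b j then p j else 0)"
      unfolding Mx_expand2[OF bc(1)] using step(3)
      by (simp add: sum_negf[symmetric] if_distrib cong: if_cong)
    ultimately have "(\<Sum>j<n. if E b j then p j else 0) = 0" by simp
    hence "\<forall>j\<in>{..<n}. (if E b j then p j else 0) = 0"
      by (subst (asm) sum_nonneg_eq_0_iff) (auto simp: pnn)
    thus ?case using bc by force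
  qed
qed

end

context stree
begin

lemma case1:
  assumes v: "v < n" and w1: "w1 < n" "E v w1"
    and allz: "\<And>y. eig mu2 y \<Longrightarrow> y v = 0"
    and x1: "eig mu2 x1" "x1 w1 \<noteq> 0"
    and x: "eig mu2 x" and xs: "\<And>s. s \<in> {j. j < n \<and> E v j} - {w1} \<Longrightarrow> x s = 0"
  shows "\<forall>k<n. x k = 0"
proof (rule ccontr)
  assume "\<not> ?thesis"
  then obtain r where r: "r < n" "x r \<noteq> 0" by auto
  have xv: "x v = 0" by (rule allz[OF x])
  have x1v: "x1 v = 0" by (rule allz[OF x1(1)])
  have xN: "x j = 0" if j: "j < n" "E v j" for j
  proof (cases "j = w1")
    case False thus ?thesis using xs j by auto
  next
    case True
    have "(\<Sum>j<n. if E v j then x j else 0) = 0" by (rule nbr_sum[OF x v xv])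
    moreover have "(\<Sum>j<n. if E v j then x j else 0) = (\<Sum>j<n. if j = w1 then x w1 else 0)"
    proof (intro sum.cong refl)
      fix i assume i: "i \<in> {..<n}"
      show "(if E v i then x i else 0) = (if i = w1 then x w1 else 0)"
        using xs[of i] i w1 by auto
    qed
    ultimately show ?thesis using True w1 by (simp add: sum.delta)
  qed
  have rv: "r \<noteq> v" using r xv by auto
  obtain w where w: "w < n" "E v w" "r \<in> br v w" using br_cover[OF v r(1) rv] by auto
  have xw: "x w = 0" using xN w by simp
  have "\<exists>w2. w2 < n \<and> E v w2 \<and> w2 \<noteq> w1 \<and> x1 w2 \<noteq> 0"
  proof (rule ccontr)
    assume h: "\<not> ?thesis"
    have "(\<Sum>j<n. if E v j then x1 j else 0) = 0" by (rule nbr_sum[OF x1(1) v x1v])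
    moreover have "(\<Sum>j<n. if E v j then x1 j else 0) = (\<Sum>j<n. if j = w1 then x1 w1 else 0)"
    proof (intro sum.cong refl)
      fix i assume i: "i \<in> {..<n}"
      show "(if E v i then x1 i else 0) = (if i = w1 then x1 w1 else 0)"
        using h i w1 by auto
    qed
    ultimately have "x1 w1 = 0" using w1 by (simp add: sum.delta)
    with x1(2) show False by simp
  qed
  then obtain w2 where w2: "w2 < n" "E v w2" "w2 \<noteq> w1" "x1 w2 \<noteq> 0" by auto
  define w' where "w' = (if w = w1 then w2 else w1)"
  have w': "w' < n" "E v w'" "w' \<noteq> w" "x1 w' \<noteq> 0" unfolding w'_def using w1 w2 x1 by auto
  have wv: "w \<noteq> v" using irrE v w by auto
  have w'v: "w' \<noteq> v" using irrE v w' by auto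
  define B where "B = br v w"
  define B' where "B' = br v w'"
  have disj: "k \<notin> B'" if "k \<in> B" for k
    using br_disj[OF v w(1,2) w'(1,2)] w'(3) that unfolding B_def B'_def by auto
  define u where "u = rst B x"
  define u' where "u' = rst B' x1"
  define p where "p k = \<bar>u k\<bar>" for k
  define p' where "p' k = \<bar>u' k\<bar>" for k
  have suppp: "\<And>k. k \<notin> br v w \<Longrightarrow> p k = 0" unfolding p_def u_def rst_def B_def by simp
  have suppp': "\<And>k. k \<notin> br v w' \<Longrightarrow> p' k = 0" unfolding p'_def u'_def rst_def B'_def by simp
  have Qu: "ip u (Mx u) = mu2 * ip u u"
    unfolding ip_def sum_distrib_left
  proof (intro sum.cong refl)
    fix k assume k: "k \<in> {..<n}"
    show "u k * Mx u k = mu2 * (u k * u k)"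
    proof (cases "k \<in> B")
      case True thus ?thesis using restr_in[OF v w(1,2) x xv, of k] unfolding u_def B_def by simp
    next
      case False thus ?thesis unfolding u_def rst_def by simp
    qed
  qed
  have Qu': "ip u' (Mx u') = mu2 * ip u' u'"
    unfolding ip_def sum_distrib_left
  proof (intro sum.cong refl)
    fix k assume k: "k \<in> {..<n}"
    show "u' k * Mx u' k = mu2 * (u' k * u' k)"
    proof (cases "k \<in> B'")
      case True thus ?thesis using restr_in[OF v w'(1,2) x1(1) x1v, of k] unfolding u'_def B'_def by simp
    next
      case False thus ?thesis unfolding u'_def rst_def by simp
    qed
  qed
  have ipu: "ip p p = ip u u" unfolding ip_def p_def by (simp add: abs_mult[symmetric])
  have ipu': "ip p' p' = ip u' u'" unfolding ip_def p'_def by (simp add: abs_mult[symmetric])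
  have Qp: "ip p (Mx p) \<le> mu2 * ip p p"
    using Q_abs[of u] Qu ipu unfolding p_def by simp
  have Qp': "ip p' (Mx p') \<le> mu2 * ip p' p'"
    using Q_abs[of u'] Qu' ipu' unfolding p'_def by simp
  have cross: "ip p (Mx p') = 0"
    unfolding ip_def
  proof (rule sum.neutral, rule ballI)
    fix k assume k: "k \<in> {..<n}"
    show "p k * Mx p' k = 0"
    proof (cases "k \<in> B")
      case True
      have kn: "k < n" "k \<noteq> v" using br_bound[OF w(1) wv] True unfolding B_def by auto
      have "Mx p' k = 0"
        by (rule supp_out[OF v w'(1,2) suppp' kn(1)]) (use disj[OF True] kn in \<open>simp_all add: B'_def\<close>)
      thus ?thesis by simp
    next
      case False thus ?thesis using suppp unfolding B_def by simp
    qed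
  qed
  have ipp: "ip p p' = 0"
    unfolding ip_def
  proof (rule sum.neutral, rule ballI)
    fix k assume k: "k \<in> {..<n}"
    show "p k * p' k = 0"
    proof (cases "k \<in> B")
      case True thus ?thesis using suppp' disj[OF True] unfolding B'_def by simp
    next
      case False thus ?thesis using suppp unfolding B_def by simp
    qed
  qed
  have pnn: "\<And>k. p k \<ge> 0" unfolding p_def by simp
  have p'nn: "\<And>k. p' k \<ge> 0" unfolding p'_def by simp
  define a where "a = (\<Sum>k<n. p' k)"
  define b where "b = (\<Sum>k<n. p k)"
  have apos: "a > 0" unfolding a_def
  proof (rule sum_pos2[of _ w'])
    show "p' w' > 0" unfolding p'_def u'_def rst_def B'_def using br_self w'(4) by simp
  qed (use w' p'nn in auto)
  have bpos: "b > 0" unfolding b_def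
  proof (rule sum_pos2[of _ r])
    show "p r > 0" unfolding p_def u_def rst_def B_def using w(3) r(2) by simp
  qed (use r pnn in auto)
  define yv where "yv k = a * p k - b * p' k" for k
  have s0: "(\<Sum>k<n. yv k) = 0"
    unfolding yv_def by (simp add: sum_subtractf sum_distrib_left[symmetric] a_def b_def)
  have Qy: "ip yv (Mx yv) = a^2 * ip p (Mx p) + b^2 * ip p' (Mx p')"
    unfolding yv_def by (rule Q_comb[OF cross])
  have iy: "ip yv yv = a^2 * ip p p + b^2 * ip p' p'"
    unfolding yv_def by (rule ip_comb[OF ipp])
  have "a^2 * ip p (Mx p) \<le> a^2 * (mu2 * ip p p)" by (rule mult_left_mono[OF Qp]) simp
  moreover have "b^2 * ip p' (Mx p') \<le> b^2 * (mu2 * ip p' p')" by (rule mult_left_mono[OF Qp']) simp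
  ultimately have le: "ip yv (Mx yv) \<le> mu2 * ip yv yv" unfolding Qy iy by (simp add: algebra_simps)
  have ey: "eig mu2 yv" by (rule rayleigh[OF s0 le])
  have pe: "Mx p k = mu2 * p k" if k: "k \<in> br v w" for k
  proof -
    have kn: "k < n" "k \<noteq> v" using br_bound[OF w(1) wv k] by auto
    have kB': "k \<notin> br v w'" using disj[of k] k unfolding B_def B'_def by simp
    have M0: "Mx p' k = 0" by (rule supp_out[OF v w'(1,2) suppp' kn(1) kB' kn(2)])
    have p'0: "p' k = 0" using suppp' kB' by simp
    have e1: "Mx yv k = a * Mx p k" using Mx_minus[of a p b p' k] M0 unfolding yv_def by simp
    have e2: "Mx yv k = mu2 * (a * p k)" using ey kn p'0 unfolding eig_def yv_def by simp
    from e1 e2 have "a * Mx p k = a * (mu2 * p k)" by (metis mult.left_commute)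
    thus ?thesis using apos by simp
  qed
  have pw: "p w = 0" unfolding p_def u_def rst_def using xw by simp
  have "p r = 0" by (rule propagate[OF v w(1,2) pnn pw pe w(3)])
  thus False unfolding p_def u_def rst_def B_def using w(3) r(2) by simp
qed

lemma case2:
  assumes no1: "\<not> (\<exists>v w1 x1. v < n \<and> w1 < n \<and> E v w1 \<and> (\<forall>y. eig mu2 y \<longrightarrow> y v = 0) \<and> eig mu2 x1 \<and> x1 w1 \<noteq> 0)"
    and x: "eig mu2 x" and x0: "x 0 = 0"
  shows "\<forall>k<n. x k = 0"
proof (rule ccontr)
  assume "\<not> ?thesis"
  then obtain r where r: "r < n" "x r \<noteq> 0" by auto
  have "(grel n E)\<^sup>*\<^sup>* 0 r"
    using tree[unfolded is_tree_def connected_graph_def] r(1) unfolding grel_def by auto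
  hence "x r \<noteq> 0 \<Longrightarrow> \<exists>v w. v < n \<and> w < n \<and> E v w \<and> x v = 0 \<and> x w \<noteq> 0"
  proof (induct rule: rtranclp_induct)
    case base thus ?case using x0 by simp
  next
    case (step b c)
    show ?case
    proof (cases "x b = 0")
      case True thus ?thesis using step(2,4) unfolding grel_def by auto
    next
      case False thus ?thesis using step(3) by simp
    qed
  qed
  then obtain v w where vw: "v < n" "w < n" "E v w" "x v = 0" "x w \<noteq> 0" using r by auto
  have "\<forall>y. eig mu2 y \<longrightarrow> y v = 0" using lemA[OF vw(1,2,3) x vw(4,5)] by auto
  with vw x no1 show False by blast
qed

end

theorem proposition2p8:
  fixes n :: nat and E :: "nat \<Rightarrow> nat \<Rightarrow> bool"
  assumes "is_tree n E"
    and "max_degree n E \<ge> 2"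
  shows "eig_mult (laplacian n E) (kth_eigenvalue (laplacian n E) 2) \<le> max_degree n E - 1"
proof -
  have tr: "is_tree n E" by fact
  have sg: "sgraph n E" using tr unfolding is_tree_def simple_graph_def by unfold_locales auto
  interpret sgraph n E by (rule sg)
  have n1: "1 \<le> n" using tr unfolding is_tree_def by simp
  have fin: "finite (degree n E ` {0..<n})" by simp
  have ne: "degree n E ` {0..<n} \<noteq> {}" using n1 by auto
  have deg_le: "degree n E v \<le> max_degree n E" if "v < n" for v
    unfolding max_degree_def by (rule Max_ge[OF fin]) (use that in auto)
  have n2: "2 \<le> n"
  proof -
    have "max_degree n E \<in> degree n E ` {0..<n}" unfolding max_degree_def by (rule Max_in[OF fin ne])
    then obtain i where i: "i < n" "degree n E i = max_degree n E" by auto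
    have "degree n E i \<le> card {..<n}" unfolding degree_def by (rule card_mono) auto
    thus ?thesis using i assms(2) by simp
  qed
  obtain d q where dq: "(\<forall>i<n. \<forall>k<n. (\<Sum>j<n. laplacian n E $$ (k,j) * q i j) = d i * q i k)
    \<and> (\<forall>\<mu>. Polynomial.order \<mu> (char_poly (laplacian n E)) = card {i. i < n \<and> d i = \<mu>})
    \<and> (\<forall>y. \<exists>c. \<forall>k<n. y k = (\<Sum>i<n. c i * q i k))
    \<and> (\<forall>c. (\<forall>k<n. (\<Sum>i<n. c i * q i k) = 0) \<longrightarrow> (\<forall>i<n. c i = 0))"
    using sym_spectral[OF L_carrier L_sym] by (elim exE) (rule that)
  have dq1: "\<forall>i<n. \<forall>k<n. (\<Sum>j<n. laplacian n E $$ (k,j) * q i j) = d i * q i k"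
    by (rule conjunct1[OF dq])
  have dq2: "\<forall>\<mu>. Polynomial.order \<mu> (char_poly (laplacian n E)) = card {i. i < n \<and> d i = \<mu>}"
    by (rule conjunct1[OF conjunct2[OF dq]])
  have dq3: "\<forall>y. \<exists>c. \<forall>k<n. y k = (\<Sum>i<n. c i * q i k)"
    by (rule conjunct1[OF conjunct2[OF conjunct2[OF dq]]])
  have dq4: "\<forall>c. (\<forall>k<n. (\<Sum>i<n. c i * q i k) = 0) \<longrightarrow> (\<forall>i<n. c i = 0)"
    by (rule conjunct2[OF conjunct2[OF conjunct2[OF dq]]])
  have cg: "connected_graph n E" using tr unfolding is_tree_def by simp
  interpret st: stree n E d q
  proof unfold_locales
    show "\<forall>i<n. \<forall>k<n. (\<Sum>j<n. laplacian n E $$ (k,j) * q i j) = d i * q i k" by (rule dq1)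
    show "\<forall>\<mu>. Polynomial.order \<mu> (char_poly (laplacian n E)) = card {i. i < n \<and> d i = \<mu>}" by (rule dq2)
    show "\<forall>y. \<exists>c. \<forall>k<n. y k = (\<Sum>i<n. c i * q i k)" by (rule dq3)
    show "\<forall>c. (\<forall>k<n. (\<Sum>i<n. c i * q i k) = 0) \<longrightarrow> (\<forall>i<n. c i = 0)" by (rule dq4)
    show "connected_graph n E" by (rule cg)
    show "2 \<le> n" by (rule n2)
    show "is_tree n E" by (rule tr)
  qed
  have mu: "kth_eigenvalue (laplacian n E) 2 = st.mu2" unfolding st.mu2_def ..
  show ?thesis
  proof (cases "\<exists>v w1 x1. v < n \<and> w1 < n \<and> E v w1 \<and> (\<forall>y. eig st.mu2 y \<longrightarrow> y v = 0) \<and> eig st.mu2 x1 \<and> x1 w1 \<noteq> 0")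
    case True
    then obtain v w1 x1 where c: "v < n" "w1 < n" "E v w1" "\<forall>y. eig st.mu2 y \<longrightarrow> y v = 0"
      "eig st.mu2 x1" "x1 w1 \<noteq> 0" by blast
    define S where "S = {j. j < n \<and> E v j} - {w1}"
    have fS: "finite S" unfolding S_def by (rule finite_subset[of _ "{..<n}"]) auto
    have "eig_mult (laplacian n E) st.mu2 \<le> card S"
    proof (rule st.mult_bound[OF fS])
      fix x assume x: "eig st.mu2 x" and xs: "\<forall>s\<in>S. x s = 0"
      show "\<forall>k<n. x k = 0"
        by (rule st.case1[OF c(1,2,3) _ c(5,6) x]) (use c(4) xs in \<open>auto simp: S_def\<close>)
    qed
    also have "card S = degree n E v - 1"
      unfolding S_def degree_def using c(2,3) by (subst card_Diff_singleton) auto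
    also have "\<dots> \<le> max_degree n E - 1" using deg_le[OF c(1)] by simp
    finally show ?thesis unfolding mu .
  next
    case False
    have "eig_mult (laplacian n E) st.mu2 \<le> card {0::nat}"
    proof (rule st.mult_bound)
      fix x assume x: "eig st.mu2 x" and xs: "\<forall>s\<in>{0}. x s = 0"
      show "\<forall>k<n. x k = 0" by (rule st.case2[OF False x]) (use xs in simp)
    qed simp
    also have "\<dots> \<le> max_degree n E - 1" using assms(2) by simp
    finally show ?thesis unfolding mu .
  qed
qed

end
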